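(* Let $H_1, \dots ,H_t$ be graphs such that each $H_i$ is $(\alpha_i, A_i, \eta_i)$-Erdős–Simonovits good (with $0\le\alpha_i<1$). Fix an edge $f_i$ in each $H_i$, and let $\mathcal{H}$ be the set of all graphs formed by gluing the $H_i$'s along the $f_i$'s. Let $\alpha = \max_{1\leq i \leq t}\alpha_i$. Then $$\mathrm{ex}(n, \mathcal{H}) = O(n^{1 + \alpha}).$$ Moreover, if $|\mathcal{H}| = 1$, then the unique graph in $\mathcal{H}$ is $(\alpha,A, \eta)$-Erdős–Simonovits good for some constants $A, \eta>0$.
   Context: A graph $H$ is $(\alpha, A, \eta)$-Erdős–Simonovits good if every $n$-vertex graph $G$ with $pn^2\geq An^{1 + \alpha}$ edges contains at least $\eta p^{\mathrm{e}(H)}n^{v(H)}$ copies of $H$. Gluing the $H_i$ along the $f_i$: take the vertex-disjoint union of the $H_i$ and identify all the edges $f_i$ into one edge, choosing for each $i$ one of the two ways of matching the endpoints of $f_i$ to the two endpoints of the common edge; $\mathcal{H}$ is the set of all graphs arising from all such choices. $\mathrm{ex}(n,\mathcal{H})$ is the maximum number of edges in an $n$-vertex graph containing no member of $\mathcal{H}$. *)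

theory Defs
  imports Complex_Main "HOL-Library.FuncSet" "HOL-Library.Landau_Symbols"
begin

definition graph :: "'v set \<Rightarrow> 'v set set \<Rightarrow> bool" where
  "graph V E \<longleftrightarrow> finite V \<and> (\<forall>e\<in>E. e \<subseteq> V \<and> card e = 2)"

definition embeddings :: "'v set \<Rightarrow> 'v set set \<Rightarrow> 'w set \<Rightarrow> 'w set set \<Rightarrow> ('v \<Rightarrow> 'w) set" where
  "embeddings VH EH VG EG =
     {\<phi>. \<phi> \<in> VH \<rightarrow>\<^sub>E VG \<and> inj_on \<phi> VH \<and> (\<forall>e\<in>EH. \<phi> ` e \<in> EG)}"

definition copies :: "'v set \<Rightarrow> 'v set set \<Rightarrow> 'w set \<Rightarrow> 'w set set \<Rightarrow> nat" where
  "copies VH EH VG EG = card (embeddings VH EH VG EG)"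

definition contains :: "'w set \<Rightarrow> 'w set set \<Rightarrow> 'v set \<Rightarrow> 'v set set \<Rightarrow> bool" where
  "contains VG EG VH EH \<longleftrightarrow> embeddings VH EH VG EG \<noteq> {}"

text \<open>Host graphs are taken with vertices in nat (every finite graph is isomorphic to one).\<close>
definition ES_good :: "real \<Rightarrow> real \<Rightarrow> real \<Rightarrow> 'v set \<Rightarrow> 'v set set \<Rightarrow> bool" where
  "ES_good \<alpha> A \<eta> VH EH \<longleftrightarrow>
     (\<forall>(V::nat set) E n. graph V E \<and> card V = n \<and> n > 0 \<and>
        real (card E) \<ge> A * real n powr (1 + \<alpha>) \<longrightarrow>
        real (copies VH EH V E) \<ge>
          \<eta> * (real (card E) / real n ^ 2) ^ card EH * real n ^ card VH)"

definition ex :: "nat \<Rightarrow> ('w set \<times> 'w set set) set \<Rightarrow> nat" where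
  "ex n F = Max {card E | E. graph {0..<n} E \<and>
                  (\<forall>H\<in>F. \<not> contains {0..<n::nat} E (fst H) (snd H))}"

text \<open>Gluing H_0,...,H_{t-1} (vertex sets V i, edge sets E i) along the edges
  f_i = {a i, b i}: the common edge is {Inl True, Inl False}; sigma i chooses
  which endpoint of f_i goes to Inl True.\<close>
definition glue_map :: "(nat \<Rightarrow> nat) \<Rightarrow> (nat \<Rightarrow> nat) \<Rightarrow> (nat \<Rightarrow> bool) \<Rightarrow> nat \<Rightarrow> nat \<Rightarrow> bool + nat \<times> nat" where
  "glue_map a b \<sigma> i v =
     (if v = a i then Inl (\<sigma> i) else if v = b i then Inl (\<not> \<sigma> i) else Inr (i, v))"

definition glue_V :: "nat \<Rightarrow> (nat \<Rightarrow> nat set) \<Rightarrow> (nat \<Rightarrow> nat) \<Rightarrow> (nat \<Rightarrow> nat) \<Rightarrow> (nat \<Rightarrow> bool) \<Rightarrow> (bool + nat \<times> nat) set" where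
  "glue_V t V a b \<sigma> = (\<Union>i<t. glue_map a b \<sigma> i ` V i)"

definition glue_E :: "nat \<Rightarrow> (nat \<Rightarrow> nat set set) \<Rightarrow> (nat \<Rightarrow> nat) \<Rightarrow> (nat \<Rightarrow> nat) \<Rightarrow> (nat \<Rightarrow> bool) \<Rightarrow> (bool + nat \<times> nat) set set" where
  "glue_E t E a b \<sigma> = (\<Union>i<t. (\<lambda>e. glue_map a b \<sigma> i ` e) ` E i)"

definition glued_family :: "nat \<Rightarrow> (nat \<Rightarrow> nat set) \<Rightarrow> (nat \<Rightarrow> nat set set) \<Rightarrow> (nat \<Rightarrow> nat) \<Rightarrow> (nat \<Rightarrow> nat)
      \<Rightarrow> ((bool + nat \<times> nat) set \<times> (bool + nat \<times> nat) set set) set" where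
  "glued_family t V E a b = {(glue_V t V a b \<sigma>, glue_E t E a b \<sigma>) | \<sigma>. True}"

definition graph_iso :: "'v set \<Rightarrow> 'v set set \<Rightarrow> 'w set \<Rightarrow> 'w set set \<Rightarrow> bool" where
  "graph_iso V1 E1 V2 E2 \<longleftrightarrow>
     (\<exists>\<phi>. bij_betw \<phi> V1 V2 \<and> (\<lambda>e. \<phi> ` e) ` E1 = E2)"

end

theory Submission
  imports Defs
begin



lemma finite_embeddings:
  assumes "finite VH" "finite VG"
  shows "finite (embeddings VH EH VG EG)"
proof -
  have "embeddings VH EH VG EG \<subseteq> PiE VH (\<lambda>_. VG)" unfolding embeddings_def by auto
  moreover have "finite (PiE VH (\<lambda>_. VG))" using assms by (simp add: finite_PiE)
  ultimately show ?thesis by (rule finite_subset)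
qed

lemma card_edges_le:
  assumes "graph V E"
  shows "card E \<le> card V ^ 2"
proof -
  have fin: "finite V" using assms unfolding graph_def by auto
  have "E \<subseteq> {B. B \<subseteq> V \<and> card B = 2}" using assms unfolding graph_def by auto
  hence "card E \<le> card {B. B \<subseteq> V \<and> card B = 2}"
    by (rule card_mono[rotated]) (use fin in auto)
  also have "\<dots> = card V choose 2" using fin by (simp add: n_subsets)
  also have "\<dots> \<le> card V ^ 2"
  proof (cases "2 \<le> card V")
    case True then show ?thesis by (rule binomial_le_pow)
  next
    case False then show ?thesis by (simp add: binomial_eq_0)
  qed
  finally show ?thesis .
qed

lemma half_subsets:
  assumes "finite R"
  shows "2 ^ card R \<le> 2 * card {W. W \<subseteq> R \<and> card R \<le> 2 * card W}"
proof -
  let ?S = "{W. W \<subseteq> R \<and> card R \<le> 2 * card W}"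
  have fS: "finite ?S" using assms by auto
  have "Pow R \<subseteq> ?S \<union> (\<lambda>W. R - W) ` ?S"
  proof
    fix W assume W: "W \<in> Pow R"
    hence Wsub: "W \<subseteq> R" by auto
    have fW: "finite W" using Wsub assms finite_subset by auto
    have c: "card (R - W) + card W = card R"
      using Wsub assms by (metis card_Diff_subset card_mono le_add_diff_inverse2 fW)
    show "W \<in> ?S \<union> (\<lambda>W. R - W) ` ?S"
    proof (cases "card R \<le> 2 * card W")
      case True then show ?thesis using Wsub by auto
    next
      case False
      hence "card R \<le> 2 * card (R - W)" using c by linarith
      moreover have "W = R - (R - W)" using Wsub by auto
      ultimately show ?thesis by blast
    qed
  qed
  hence "card (Pow R) \<le> card (?S \<union> (\<lambda>W. R - W) ` ?S)"
    by (rule card_mono[rotated]) (use fS in auto)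
  also have "\<dots> \<le> card ?S + card ((\<lambda>W. R - W) ` ?S)" by (rule card_Un_le)
  also have "\<dots> \<le> card ?S + card ?S" using card_image_le[OF fS] by simp
  finally show ?thesis using assms by (simp add: card_Pow)
qed




lemma double_count:
  assumes "finite X" "finite Y"
  shows "(\<Sum>x\<in>X. card {y\<in>Y. P x y}) = (\<Sum>y\<in>Y. card {x\<in>X. P x y})"
proof -
  have "(\<Sum>x\<in>X. card {y\<in>Y. P x y}) = card (Sigma X (\<lambda>x. {y\<in>Y. P x y}))"
    using assms by (simp add: card_SigmaI)
  also have "Sigma X (\<lambda>x. {y\<in>Y. P x y}) = prod.swap ` Sigma Y (\<lambda>y. {x\<in>X. P x y})"
    by (auto simp: image_iff)
  also have "card \<dots> = card (Sigma Y (\<lambda>y. {x\<in>X. P x y}))"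
    by (rule card_image) (simp add: inj_on_def)
  also have "\<dots> = (\<Sum>y\<in>Y. card {x\<in>X. P x y})"
    using assms by (simp add: card_SigmaI)
  finally show ?thesis .
qed

lemma averaging:
  fixes V :: "'a set" and B :: "'a set set" and C :: "'a set \<Rightarrow> 'a set"
  assumes fin: "finite V"
    and B: "\<forall>xy\<in>B. xy \<subseteq> V \<and> card xy = 2 \<and> C xy \<subseteq> V \<and> C xy \<inter> xy = {} \<and> card (C xy) \<le> s"
  shows "\<exists>W. W \<subseteq> V \<and> card V \<le> 2 * card W + s \<and>
           card B \<le> 2^(3+s) * card {xy\<in>B. xy \<subseteq> W \<and> C xy \<inter> W = {}}"
proof (rule ccontr)
  assume neg: "\<not> ?thesis"
  define WW where "WW = {W. W \<subseteq> V \<and> card V \<le> 2 * card W + s}"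
  have fB: "finite B"
  proof -
    have "B \<subseteq> Pow V" using B by auto
    thus ?thesis using fin finite_subset by auto
  qed
  have fWW: "finite WW" unfolding WW_def using fin by auto
  have cWW: "card WW \<le> 2 ^ card V"
  proof -
    have "WW \<subseteq> Pow V" unfolding WW_def by auto
    hence "card WW \<le> card (Pow V)" using fin by (intro card_mono) auto
    thus ?thesis using fin by (simp add: card_Pow)
  qed
  have VWW: "V \<in> WW" unfolding WW_def by auto
  have each: "2 ^ card V \<le> 2^(3+s) * card {W\<in>WW. xy \<subseteq> W \<and> C xy \<inter> W = {}}"
    if xyB: "xy \<in> B" for xy
  proof -
    define R where "R = V - xy - C xy"
    have xyV: "xy \<subseteq> V" and c2: "card xy = 2" and CV: "C xy \<subseteq> V" and Cxy: "C xy \<inter> xy = {}"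
      and cC: "card (C xy) \<le> s" using B xyB by auto
    have fR: "finite R" unfolding R_def using fin by auto
    have fxy: "finite xy" using xyV fin finite_subset by auto
    have fC: "finite (C xy)" using CV fin finite_subset by auto
    have Vdec: "V = R \<union> xy \<union> C xy" unfolding R_def using xyV CV by auto
    have cV: "card V = card R + 2 + card (C xy)"
    proof -
      have "card V = card (R \<union> xy) + card (C xy)"
        unfolding Vdec by (rule card_Un_disjoint) (use fR fxy fC Cxy in \<open>auto simp: R_def\<close>)
      also have "card (R \<union> xy) = card R + card xy"
        by (rule card_Un_disjoint) (use fR fxy in \<open>auto simp: R_def\<close>)
      finally show ?thesis using c2 by simp
    qed
    define S where "S = {W. W \<subseteq> R \<and> card R \<le> 2 * card W}"
    have hS: "2 ^ card R \<le> 2 * card S" unfolding S_def by (rule half_subsets[OF fR])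
    have img: "(\<lambda>W. xy \<union> W) ` S \<subseteq> {W\<in>WW. xy \<subseteq> W \<and> C xy \<inter> W = {}}"
    proof
      fix U assume "U \<in> (\<lambda>W. xy \<union> W) ` S"
      then obtain W where W: "W \<subseteq> R" "card R \<le> 2 * card W" and U: "U = xy \<union> W"
        unfolding S_def by auto
      have fW: "finite W" using W fR finite_subset by auto
      have "card U = card xy + card W"
        unfolding U by (rule card_Un_disjoint) (use fxy fW W in \<open>auto simp: R_def\<close>)
      hence "card V \<le> 2 * card U + s" using cV cC W c2 by linarith
      moreover have "U \<subseteq> V" using U W xyV by (auto simp: R_def)
      moreover have "C xy \<inter> U = {}" using U W Cxy by (auto simp: R_def)
      ultimately show "U \<in> {W\<in>WW. xy \<subseteq> W \<and> C xy \<inter> W = {}}" unfolding WW_def using U by auto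
    qed
    have inj: "inj_on (\<lambda>W. xy \<union> W) S"
    proof (rule inj_onI)
      fix W1 W2 assume "W1 \<in> S" "W2 \<in> S" "xy \<union> W1 = xy \<union> W2"
      moreover have "W1 \<inter> xy = {}" "W2 \<inter> xy = {}" using \<open>W1 \<in> S\<close> \<open>W2 \<in> S\<close>
        by (auto simp: S_def R_def)
      ultimately show "W1 = W2" by blast
    qed
    have "card S \<le> card {W\<in>WW. xy \<subseteq> W \<and> C xy \<inter> W = {}}"
      using card_inj_on_le[OF inj img] fWW by auto
    moreover have "(2::nat) ^ card V \<le> 2 ^ card R * 2 ^ (2 + s)"
    proof -
      have "(2::nat) ^ card V = 2 ^ card R * 2 ^ (2 + card (C xy))" using cV by (simp add: power_add)
      also have "\<dots> \<le> 2 ^ card R * 2 ^ (2 + s)" using cC by (intro mult_le_mono2 power_increasing) auto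
      finally show ?thesis .
    qed
    ultimately show ?thesis
    proof -
      assume h1: "card S \<le> card {W\<in>WW. xy \<subseteq> W \<and> C xy \<inter> W = {}}"
        and h2: "(2::nat) ^ card V \<le> 2 ^ card R * 2 ^ (2 + s)"
      have "(2::nat) ^ card R * 2 ^ (2 + s) \<le> (2 * card S) * 2 ^ (2 + s)"
        using hS by (rule mult_le_mono1)
      also have "\<dots> = 2^(3+s) * card S" by (simp add: power_add)
      also have "\<dots> \<le> 2^(3+s) * card {W\<in>WW. xy \<subseteq> W \<and> C xy \<inter> W = {}}"
        using h1 by (rule mult_le_mono2)
      finally show ?thesis using h2 by linarith
    qed
  qed
  have lt: "2^(3+s) * card {xy\<in>B. xy \<subseteq> W \<and> C xy \<inter> W = {}} < card B" if "W \<in> WW" for W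
    using neg that unfolding WW_def by auto
  have "(\<Sum>W\<in>WW. 2^(3+s) * card {xy\<in>B. xy \<subseteq> W \<and> C xy \<inter> W = {}}) < (\<Sum>W\<in>WW. card B)"
    by (rule sum_strict_mono) (use fWW VWW lt in auto)
  also have "\<dots> = card WW * card B" by simp
  also have "\<dots> \<le> 2 ^ card V * card B" using cWW by simp
  finally have A1: "(\<Sum>W\<in>WW. 2^(3+s) * card {xy\<in>B. xy \<subseteq> W \<and> C xy \<inter> W = {}}) < 2 ^ card V * card B" .
  have "(\<Sum>W\<in>WW. 2^(3+s) * card {xy\<in>B. xy \<subseteq> W \<and> C xy \<inter> W = {}})
      = 2^(3+s) * (\<Sum>W\<in>WW. card {xy\<in>B. xy \<subseteq> W \<and> C xy \<inter> W = {}})" by (simp add: sum_distrib_left)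
  also have "(\<Sum>W\<in>WW. card {xy\<in>B. xy \<subseteq> W \<and> C xy \<inter> W = {}})
      = (\<Sum>xy\<in>B. card {W\<in>WW. xy \<subseteq> W \<and> C xy \<inter> W = {}})"
    by (rule double_count[OF fWW fB])
  also have "2^(3+s) * \<dots> = (\<Sum>xy\<in>B. 2^(3+s) * card {W\<in>WW. xy \<subseteq> W \<and> C xy \<inter> W = {}})"
    by (simp add: sum_distrib_left)
  also have "\<dots> \<ge> (\<Sum>xy\<in>B. 2 ^ card V)" by (rule sum_mono) (use each in auto)
  finally have "(\<Sum>xy\<in>B. 2 ^ card V) < 2 ^ card V * card B" using A1 by linarith
  thus False by (simp add: mult.commute)
qed




definition emb_at :: "nat set \<Rightarrow> nat set set \<Rightarrow> nat \<Rightarrow> nat \<Rightarrow> nat set \<Rightarrow> nat set set \<Rightarrow> nat set \<Rightarrow> nat set \<Rightarrow> (nat \<Rightarrow> nat) set" where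
  "emb_at VH EH a b VG EG xy C = {\<phi> \<in> embeddings VH EH VG EG. \<phi> ` {a, b} = xy \<and> \<phi> ` VH \<inter> C = {}}"

lemma finite_emb_at:
  assumes "finite VH" "finite VG"
  shows "finite (emb_at VH EH a b VG EG xy C)"
  using finite_embeddings[OF assms] unfolding emb_at_def by auto

lemma emb_sub_union:
  assumes W: "W \<subseteq> VG" and F: "F \<subseteq> EG" and f: "{a, b} \<in> EH"
    and C: "\<forall>xy\<in>F. C xy \<inter> W = {}"
  shows "embeddings VH EH W F \<subseteq> (\<Union>xy\<in>F. emb_at VH EH a b VG EG xy (C xy))"
proof
  fix \<psi> assume \<psi>: "\<psi> \<in> embeddings VH EH W F"
  hence p1: "\<psi> \<in> VH \<rightarrow>\<^sub>E W" and p2: "inj_on \<psi> VH" and p3: "\<forall>e\<in>EH. \<psi> ` e \<in> F"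
    unfolding embeddings_def by auto
  have "\<psi> \<in> VH \<rightarrow>\<^sub>E VG" using p1 W by (auto simp: PiE_iff)
  hence emb: "\<psi> \<in> embeddings VH EH VG EG" using p2 p3 F unfolding embeddings_def by auto
  have xy: "\<psi> ` {a, b} \<in> F" using p3 f by auto
  have "\<psi> ` VH \<subseteq> W" using p1 by (auto simp: PiE_iff)
  hence "\<psi> ` VH \<inter> C (\<psi> ` {a, b}) = {}" using C xy by auto
  thus "\<psi> \<in> (\<Union>xy\<in>F. emb_at VH EH a b VG EG xy (C xy))"
    using emb xy unfolding emb_at_def by auto
qed

lemma graph_edge_card:
  assumes "graph V E" "{a, b} \<in> E"
  shows "a \<noteq> b" "a \<in> V" "b \<in> V"
proof -
  have h: "{a,b} \<subseteq> V" "card {a,b} = 2" using assms unfolding graph_def by auto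
  show "a \<noteq> b"
  proof
    assume "a = b" thus False using h(2) by simp
  qed
  show "a \<in> V" "b \<in> V" using h(1) by auto
qed

lemma graph_card_V_ge2:
  assumes "graph V E" "{a, b} \<in> E"
  shows "2 \<le> card V"
proof -
  have fin: "finite V" using assms unfolding graph_def by auto
  have "{a,b} \<subseteq> V" "card {a,b} = 2" using assms unfolding graph_def by auto
  hence "card {a,b} \<le> card V" using card_mono[OF fin] by blast
  thus ?thesis using \<open>card {a,b} = 2\<close> by simp
qed

lemma graph_finite_E:
  assumes "graph V E" shows "finite E"
proof -
  have "E \<subseteq> Pow V" "finite V" using assms unfolding graph_def by auto
  thus ?thesis using finite_subset by auto
qed




lemma key:
  fixes VG :: "nat set" and EG :: "nat set set" and VH :: "nat set" and EH :: "nat set set"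
    and a b :: nat and \<alpha> A \<eta> L :: real and s n :: nat
  assumes gG: "graph VG EG" and cVG: "card VG = n" and npos: "n > 0" and Ene: "EG \<noteq> {}"
    and gH: "graph VH EH" and fH: "{a,b} \<in> EH" and etapos: "\<eta> > 0"
    and ES: "ES_good \<alpha> A \<eta> VH EH"
    and Lpos: "L > 0" and alpos: "0 \<le> \<alpha>" and ns: "2*s \<le> n"
    and big: "real (card EG) \<ge> L * 2^(3+s) * max A 0 * real n powr (1+\<alpha>)"
  shows "real (card {xy\<in>EG. \<exists>C. C \<subseteq> VG \<and> card C \<le> s \<and> C \<inter> xy = {} \<and>
           real (card (emb_at VH EH a b VG EG xy C)) <
             \<eta> / (2 * (L*2^(3+s))^card EH * 4^card VH) * (real (card EG) / real n^2)^(card EH - 1)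
               * real n^(card VH - 2)}) < real (card EG) / L"
proof (rule ccontr)
  define e where "e = real (card EG)"
  define p where "p = e / real n^2"
  define D :: real where "D = 2^(3+s)"
  define eH where "eH = card EH"
  define vH where "vH = card VH"
  define \<delta> where "\<delta> = \<eta> / (2 * (L*D)^eH * 4^vH)"
  define \<tau> where "\<tau> = \<delta> * p^(eH - 1) * real n^(vH - 2)"
  define P where "P = (\<lambda>xy C. C \<subseteq> VG \<and> card C \<le> s \<and> C \<inter> xy = {} \<and>
           real (card (emb_at VH EH a b VG EG xy C)) < \<tau>)"
  define B where "B = {xy\<in>EG. \<exists>C. P xy C}"
  assume "\<not> ?thesis"
  hence cB: "real (card B) \<ge> e / L"
    unfolding B_def P_def \<tau>_def \<delta>_def D_def eH_def vH_def p_def e_def by simp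
  have finG: "finite VG" using gG unfolding graph_def by auto
  have finH: "finite VH" using gH unfolding graph_def by auto
  have fEG: "finite EG"
  proof -
    have "EG \<subseteq> Pow VG" using gG unfolding graph_def by auto
    thus ?thesis using finG finite_subset by auto
  qed
  have epos: "e > 0" unfolding e_def using Ene fEG by (simp add: card_gt_0_iff)
  have eH1: "eH \<ge> 1" unfolding eH_def using fH graph_finite_E[OF gH]
    by (metis One_nat_def Suc_leI card_gt_0_iff empty_iff)
  have vH2: "vH \<ge> 2" unfolding vH_def by (rule graph_card_V_ge2[OF gH fH])
  define C where "C = (\<lambda>xy. SOME C. P xy C)"
  have CP: "P xy (C xy)" if "xy \<in> B" for xy
    using that unfolding B_def C_def by (auto intro: someI_ex)
  have hypB: "\<forall>xy\<in>B. xy \<subseteq> VG \<and> card xy = 2 \<and> C xy \<subseteq> VG \<and> C xy \<inter> xy = {} \<and> card (C xy) \<le> s"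
  proof
    fix xy assume xy: "xy \<in> B"
    hence "xy \<in> EG" unfolding B_def by auto
    hence "xy \<subseteq> VG \<and> card xy = 2" using gG unfolding graph_def by auto
    thus "xy \<subseteq> VG \<and> card xy = 2 \<and> C xy \<subseteq> VG \<and> C xy \<inter> xy = {} \<and> card (C xy) \<le> s"
      using CP[OF xy] unfolding P_def by auto
  qed
  obtain W where WWW: "W \<subseteq> VG \<and> card VG \<le> 2 * card W + s \<and>
      card B \<le> 2^(3+s) * card {xy\<in>B. xy \<subseteq> W \<and> C xy \<inter> W = {}}"
    using averaging[OF finG hypB] by (elim exE) (rule that)
  have W: "W \<subseteq> VG" and nW: "card VG \<le> 2 * card W + s"
    and BF: "card B \<le> 2^(3+s) * card {xy\<in>B. xy \<subseteq> W \<and> C xy \<inter> W = {}}"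
    using WWW by auto
  define F where "F = {xy\<in>B. xy \<subseteq> W \<and> C xy \<inter> W = {}}"
  define f where "f = real (card F)"
  define m where "m = card W"
  have BF': "real (card B) \<le> D * f"
  proof -
    have "real (card B) \<le> real (2^(3+s) * card F)" unfolding F_def using BF by (rule of_nat_mono)
    thus ?thesis unfolding D_def f_def by simp
  qed
  have LDpos: "L * D > 0" unfolding D_def using Lpos by simp
  have fge: "f \<ge> e / (L * D)"
  proof -
    have "e / L \<le> D * f" using cB BF' by linarith
    thus ?thesis using Lpos unfolding D_def by (simp add: field_simps)
  qed
  have "e / (L * D) > 0" using epos LDpos by simp
  hence fpos: "f > 0" using fge by linarith
  have FB: "F \<subseteq> B" unfolding F_def by auto
  have FE: "F \<subseteq> EG" using FB unfolding B_def by auto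
  have fF: "finite F" using FE fEG finite_subset by auto
  have Fne: "F \<noteq> {}" using fpos unfolding f_def by auto
  have finW: "finite W" using W finG finite_subset by auto
  have gWF: "graph W F"
  proof -
    have "\<forall>e\<in>F. e \<subseteq> W \<and> card e = 2"
    proof
      fix e assume "e \<in> F"
      hence "e \<in> EG" "e \<subseteq> W" using FE unfolding F_def by auto
      thus "e \<subseteq> W \<and> card e = 2" using gG unfolding graph_def by auto
    qed
    thus ?thesis unfolding graph_def using finW by simp
  qed
  have mpos: "m > 0"
  proof -
    obtain xy where "xy \<in> F" using Fne by auto
    hence "xy \<subseteq> W" "card xy = 2" using gWF unfolding graph_def by auto
    hence "W \<noteq> {}" by auto
    thus ?thesis unfolding m_def using finW by (simp add: card_gt_0_iff)
  qed
  have mn: "m \<le> n" unfolding m_def using card_mono[OF finG W] cVG by simp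
  have m4: "real n \<le> 4 * real m" using nW ns cVG unfolding m_def by linarith
  have ESapp: "f \<ge> A * real m powr (1 + \<alpha>)"
  proof (cases "A \<le> 0")
    case True
    have "A * real m powr (1 + \<alpha>) \<le> 0" using True by (simp add: mult_nonpos_nonneg)
    thus ?thesis using fpos by linarith
  next
    case False
    have "A * real m powr (1 + \<alpha>) \<le> A * real n powr (1 + \<alpha>)"
    proof -
      have "real m powr (1 + \<alpha>) \<le> real n powr (1 + \<alpha>)"
        using mn alpos by (intro powr_mono2) auto
      thus ?thesis using False by simp
    qed
    also have "\<dots> \<le> e / (L * D)"
    proof -
      have "L * D * (A * real n powr (1 + \<alpha>)) \<le> e"
        using big False unfolding e_def D_def by (simp add: mult.assoc)
      thus ?thesis using LDpos by (simp add: field_simps)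
    qed
    finally show ?thesis using fge by linarith
  qed
  have lower: "real (copies VH EH W F) \<ge> \<eta> * (f / real m ^ 2) ^ eH * real m ^ vH"
  proof -
    have "\<forall>(V::nat set) E n. graph V E \<and> card V = n \<and> n > 0 \<and>
        real (card E) \<ge> A * real n powr (1 + \<alpha>) \<longrightarrow>
        real (copies VH EH V E) \<ge> \<eta> * (real (card E) / real n ^ 2) ^ card EH * real n ^ card VH"
      using ES unfolding ES_good_def by blast
    hence "graph W F \<and> card W = m \<and> m > 0 \<and> real (card F) \<ge> A * real m powr (1 + \<alpha>) \<longrightarrow>
        real (copies VH EH W F) \<ge> \<eta> * (real (card F) / real m ^ 2) ^ card EH * real m ^ card VH"
      by blast
    thus ?thesis using gWF ESapp mpos unfolding f_def m_def eH_def vH_def by blast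
  qed
  have upper: "real (copies VH EH W F) < \<tau> * f"
  proof -
    have sub: "embeddings VH EH W F \<subseteq> (\<Union>xy\<in>F. emb_at VH EH a b VG EG xy (C xy))"
      by (rule emb_sub_union[OF W FE fH]) (auto simp: F_def)
    have "copies VH EH W F \<le> card (\<Union>xy\<in>F. emb_at VH EH a b VG EG xy (C xy))"
      unfolding copies_def using sub fF finite_emb_at[OF finH finG] by (intro card_mono) auto
    also have "\<dots> \<le> (\<Sum>xy\<in>F. card (emb_at VH EH a b VG EG xy (C xy)))"
      using fF by (rule card_UN_le)
    finally have "real (copies VH EH W F) \<le> (\<Sum>xy\<in>F. real (card (emb_at VH EH a b VG EG xy (C xy))))"
      by (metis of_nat_le_iff of_nat_sum)
    also have "\<dots> < (\<Sum>xy\<in>F. \<tau>)"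
      using fF Fne CP FB unfolding P_def by (intro sum_strict_mono) auto
    also have "\<dots> = \<tau> * f" unfolding f_def by simp
    finally show ?thesis .
  qed
  have npos': "real n > 0" using npos by simp
  have mpos': "real m > 0" using mpos by simp
  have ppos: "p > 0" unfolding p_def using epos npos' by simp
  have c1: "\<eta> * (f / real n ^ 2) ^ eH * (real n / 4) ^ vH \<le> \<eta> * (f / real m ^ 2) ^ eH * real m ^ vH"
  proof -
    have "f / real n ^ 2 \<le> f / real m ^ 2"
      using fpos mpos' mn by (intro divide_left_mono power_mono) auto
    hence "(f / real n ^ 2) ^ eH \<le> (f / real m ^ 2) ^ eH"
      using fpos npos' by (intro power_mono) auto
    moreover have "(real n / 4) ^ vH \<le> real m ^ vH"
      using m4 npos' by (intro power_mono) auto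
    ultimately show ?thesis using etapos fpos npos'
      by (intro mult_left_mono mult_mono) auto
  qed
  have c2: "p / (L * D) \<le> f / real n ^ 2"
    unfolding p_def using fge npos' LDpos by (simp add: field_simps)
  have c3: "\<eta> * (p / (L * D)) ^ eH * (real n / 4) ^ vH \<le> \<eta> * (f / real n ^ 2) ^ eH * (real n / 4) ^ vH"
    using c2 ppos LDpos etapos npos' by (intro mult_right_mono mult_left_mono power_mono) auto
  have fe: "f \<le> e" unfolding f_def e_def using card_mono[OF fEG FE] by simp
  have taupos: "\<tau> \<ge> 0" unfolding \<tau>_def \<delta>_def using etapos LDpos ppos npos' by simp
  have c4: "\<tau> * f \<le> \<tau> * e" using fe taupos by (rule mult_left_mono)
  define X where "X = \<delta> * p ^ eH * real n ^ vH"
  have Xpos: "X > 0" unfolding X_def \<delta>_def using etapos LDpos ppos npos' by simp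
  have id1: "\<eta> * (p / (L * D)) ^ eH * (real n / 4) ^ vH = 2 * X"
    unfolding X_def \<delta>_def using LDpos by (simp add: power_divide field_simps)
  have id2: "\<tau> * e = X"
  proof -
    have e_eq: "e = p * real n ^ 2" unfolding p_def using npos' by simp
    have "p ^ (eH - 1) * p = p ^ eH" using eH1
      by (metis Suc_diff_le diff_Suc_1 power_Suc2)
    moreover have "real n ^ (vH - 2) * real n ^ 2 = real n ^ vH" using vH2
      by (metis le_add_diff_inverse2 power_add)
    ultimately show ?thesis unfolding \<tau>_def X_def e_eq
      by (metis (no_types, lifting) mult.assoc mult.left_commute)
  qed
  have "2 * X < X" using c1 c3 lower upper c4 id1 id2 by linarith
  thus False using Xpos by linarith
qed




definition tup :: "nat \<Rightarrow> (nat \<Rightarrow> nat set) \<Rightarrow> (nat \<Rightarrow> nat set set) \<Rightarrow> (nat \<Rightarrow> nat) \<Rightarrow> (nat \<Rightarrow> nat)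
    \<Rightarrow> nat set \<Rightarrow> nat set set \<Rightarrow> nat set \<Rightarrow> (nat \<Rightarrow> nat \<Rightarrow> nat) set" where
  "tup j V E a b VG EG xy = {\<Phi> \<in> PiE {..<j} (\<lambda>i. embeddings (V i) (E i) VG EG).
      (\<forall>i<j. \<Phi> i ` {a i, b i} = xy) \<and> (\<forall>i<j. \<forall>k<j. i \<noteq> k \<longrightarrow> \<Phi> i ` V i \<inter> \<Phi> k ` V k \<subseteq> xy)}"

lemma tup_finite:
  assumes "finite VG" "\<forall>i<j. finite (V i)"
  shows "finite (tup j V E a b VG EG xy)"
proof -
  have "finite (PiE {..<j} (\<lambda>i. embeddings (V i) (E i) VG EG))"
    using assms by (intro finite_PiE) (auto intro: finite_embeddings)
  thus ?thesis unfolding tup_def by auto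
qed

lemma tup_zero: "tup 0 V E a b VG EG xy = {\<lambda>_. undefined}"
  unfolding tup_def by auto

lemma tup_card:
  assumes finG: "finite VG" and finV: "\<forall>i<t. finite (V i)"
    and good: "\<forall>i<t. \<forall>C. C \<subseteq> VG \<and> card C \<le> s \<and> C \<inter> xy = {} \<longrightarrow>
        real (card (emb_at (V i) (E i) (a i) (b i) VG EG xy C)) \<ge> \<tau> i"
    and taupos: "\<forall>i<t. \<tau> i \<ge> 0"
    and sB: "(\<Sum>i<t. card (V i)) \<le> s"
  shows "j \<le> t \<Longrightarrow> real (card (tup j V E a b VG EG xy)) \<ge> (\<Prod>i<j. \<tau> i)"
proof (induction j)
  case 0
  then show ?case by (simp add: tup_zero)
next
  case (Suc j)
  hence jt: "j < t" by simp
  have IH: "real (card (tup j V E a b VG EG xy)) \<ge> (\<Prod>i<j. \<tau> i)" using Suc jt by simp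
  define T where "T = tup j V E a b VG EG xy"
  define S where "S = (\<lambda>\<Phi>::nat \<Rightarrow> nat \<Rightarrow> nat. (\<Union>i<j. \<Phi> i ` V i) - xy)"
  define X where "X = (\<lambda>\<Phi>. emb_at (V j) (E j) (a j) (b j) VG EG xy (S \<Phi>))"
  define g where "g = (\<lambda>(\<Phi>::nat \<Rightarrow> nat \<Rightarrow> nat, \<phi>::nat \<Rightarrow> nat). \<Phi>(j := \<phi>))"
  have fT: "finite T" unfolding T_def using finG finV jt by (intro tup_finite) auto
  have fX: "finite (X \<Phi>)" for \<Phi> unfolding X_def using finV jt finG by (intro finite_emb_at) auto
  have Xbig: "real (card (X \<Phi>)) \<ge> \<tau> j" if "\<Phi> \<in> T" for \<Phi>
  proof -
    have emb: "\<Phi> i \<in> embeddings (V i) (E i) VG EG" if "i < j" for i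
      using \<open>\<Phi> \<in> T\<close> that unfolding T_def tup_def by auto
    have SV: "S \<Phi> \<subseteq> VG"
      using emb unfolding S_def embeddings_def by (auto simp: PiE_iff)
    have "card (S \<Phi>) \<le> card (\<Union>i<j. \<Phi> i ` V i)"
      unfolding S_def using finV jt by (intro card_mono) auto
    also have "\<dots> \<le> (\<Sum>i<j. card (\<Phi> i ` V i))" by (rule card_UN_le) simp
    also have "\<dots> \<le> (\<Sum>i<j. card (V i))" by (intro sum_mono card_image_le) (use finV jt in auto)
    also have "\<dots> \<le> (\<Sum>i<t. card (V i))" using jt by (intro sum_mono2) auto
    finally have "card (S \<Phi>) \<le> s" using sB by linarith
    moreover have "S \<Phi> \<inter> xy = {}" unfolding S_def by auto
    ultimately show ?thesis using good jt SV unfolding X_def by blast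
  qed
  have img: "g ` Sigma T X \<subseteq> tup (Suc j) V E a b VG EG xy"
  proof
    fix \<Psi> assume "\<Psi> \<in> g ` Sigma T X"
    then obtain \<Phi> \<phi> where PT: "\<Phi> \<in> T" and pX: "\<phi> \<in> X \<Phi>" and Psi: "\<Psi> = \<Phi>(j := \<phi>)"
      unfolding g_def by auto
    have PiT: "\<Phi> \<in> PiE {..<j} (\<lambda>i. embeddings (V i) (E i) VG EG)"
      and f1: "\<forall>i<j. \<Phi> i ` {a i, b i} = xy"
      and d1: "\<forall>i<j. \<forall>k<j. i \<noteq> k \<longrightarrow> \<Phi> i ` V i \<inter> \<Phi> k ` V k \<subseteq> xy"
      using PT unfolding T_def tup_def by auto
    have pe: "\<phi> \<in> embeddings (V j) (E j) VG EG" and pf: "\<phi> ` {a j, b j} = xy"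
      and pS: "\<phi> ` V j \<inter> S \<Phi> = {}" using pX unfolding X_def emb_at_def by auto
    have "\<Psi> \<in> PiE {..<Suc j} (\<lambda>i. embeddings (V i) (E i) VG EG)"
      using PiT pe unfolding Psi by (auto simp: PiE_iff extensional_def)
    moreover have "\<forall>i<Suc j. \<Psi> i ` {a i, b i} = xy"
      using f1 pf unfolding Psi by (auto simp: less_Suc_eq)
    moreover have "\<forall>i<Suc j. \<forall>k<Suc j. i \<noteq> k \<longrightarrow> \<Psi> i ` V i \<inter> \<Psi> k ` V k \<subseteq> xy"
    proof (intro allI impI)
      fix i k assume ik: "i < Suc j" "k < Suc j" "i \<noteq> k"
      have sj: "\<phi> ` V j \<inter> \<Phi> l ` V l \<subseteq> xy" if "l < j" for l
        using pS that unfolding S_def by blast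
      show "\<Psi> i ` V i \<inter> \<Psi> k ` V k \<subseteq> xy"
      proof (cases "i = j")
        case True
        then show ?thesis using ik sj unfolding Psi by auto
      next
        case False
        note iF = False
        show ?thesis
        proof (cases "k = j")
          case True
          have "i < j" using ik iF by simp
          hence "\<phi> ` V j \<inter> \<Phi> i ` V i \<subseteq> xy" by (rule sj)
          then show ?thesis using True iF unfolding Psi by auto
        next
          case False
          then show ?thesis using ik iF d1 unfolding Psi by auto
        qed
      qed
    qed
    ultimately show "\<Psi> \<in> tup (Suc j) V E a b VG EG xy" unfolding tup_def by blast
  qed
  have inj: "inj_on g (Sigma T X)"
  proof (rule inj_onI)
    fix p1 p2 assume p1: "p1 \<in> Sigma T X" and p2: "p2 \<in> Sigma T X" and eq: "g p1 = g p2"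
    obtain \<Phi>1 \<phi>1 where p1e: "p1 = (\<Phi>1, \<phi>1)" and P1: "\<Phi>1 \<in> T" using p1 by auto
    obtain \<Phi>2 \<phi>2 where p2e: "p2 = (\<Phi>2, \<phi>2)" and P2: "\<Phi>2 \<in> T" using p2 by auto
    have u1: "\<Phi>1 j = undefined" using P1 unfolding T_def tup_def by (auto simp: PiE_iff extensional_def)
    have u2: "\<Phi>2 j = undefined" using P2 unfolding T_def tup_def by (auto simp: PiE_iff extensional_def)
    have eq': "\<Phi>1(j := \<phi>1) = \<Phi>2(j := \<phi>2)" using eq unfolding g_def p1e p2e by simp
    have "\<phi>1 = \<phi>2" using fun_cong[OF eq', of j] by simp
    moreover have "\<Phi>1 = \<Phi>2"
    proof
      fix i show "\<Phi>1 i = \<Phi>2 i"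
        using fun_cong[OF eq', of i] u1 u2 by (cases "i = j") auto
    qed
    ultimately show "p1 = p2" unfolding p1e p2e by simp
  qed
  have fTS: "finite (tup (Suc j) V E a b VG EG xy)"
    using finG finV Suc.prems by (intro tup_finite) auto
  have "card (Sigma T X) \<le> card (tup (Suc j) V E a b VG EG xy)"
    using card_inj_on_le[OF inj img fTS] .
  moreover have "card (Sigma T X) = (\<Sum>\<Phi>\<in>T. card (X \<Phi>))" using fT fX by (simp add: card_SigmaI)
  ultimately have "real (card (tup (Suc j) V E a b VG EG xy)) \<ge> (\<Sum>\<Phi>\<in>T. real (card (X \<Phi>)))"
    by (metis of_nat_le_iff of_nat_sum)
  moreover have "(\<Sum>\<Phi>\<in>T. real (card (X \<Phi>))) \<ge> (\<Sum>\<Phi>\<in>T. \<tau> j)" using Xbig by (intro sum_mono) auto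
  moreover have "(\<Sum>\<Phi>\<in>T. \<tau> j) = real (card T) * \<tau> j" by simp
  moreover have "real (card T) * \<tau> j \<ge> (\<Prod>i<j. \<tau> i) * \<tau> j"
    using IH taupos jt unfolding T_def by (intro mult_right_mono) auto
  ultimately show ?case by simp
qed




definition glue_fun :: "nat \<Rightarrow> (nat \<Rightarrow> nat set) \<Rightarrow> (nat \<Rightarrow> nat) \<Rightarrow> (nat \<Rightarrow> nat) \<Rightarrow> (nat \<Rightarrow> bool)
    \<Rightarrow> nat \<Rightarrow> nat \<Rightarrow> (nat \<Rightarrow> nat \<Rightarrow> nat) \<Rightarrow> (bool + nat \<times> nat \<Rightarrow> nat)" where
  "glue_fun t V a b \<sigma> x0 x1 \<Phi> = restrict (\<lambda>u. case u of Inl \<beta> \<Rightarrow> (if \<beta> then x0 else x1)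
      | Inr p \<Rightarrow> \<Phi> (fst p) (snd p)) (glue_V t V a b \<sigma>)"

lemma glue_map_in: "i < t \<Longrightarrow> v \<in> V i \<Longrightarrow> glue_map a b \<sigma> i v \<in> glue_V t V a b \<sigma>"
  unfolding glue_V_def by auto

lemma glue_fun_Inl:
  assumes "Inl \<beta> \<in> glue_V t V a b \<sigma>"
  shows "glue_fun t V a b \<sigma> x0 x1 \<Phi> (Inl \<beta>) = (if \<beta> then x0 else x1)"
  using assms unfolding glue_fun_def by simp

lemma glue_fun_eq:
  assumes it: "i < t" and v: "v \<in> V i" and f: "\<Phi> i ` {a i, b i} = {xl, xr}" and xl1: "xl \<noteq> xr"
    and inj: "inj_on (\<Phi> i) (V i)" and ab: "a i \<noteq> b i" "a i \<in> V i" "b i \<in> V i"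
    and sig: "\<sigma> i = (\<Phi> i (a i) = xl)"
  shows "glue_fun t V a b \<sigma> xl xr \<Phi> (glue_map a b \<sigma> i v) = \<Phi> i v"
proof -
  have mem: "glue_map a b \<sigma> i v \<in> glue_V t V a b \<sigma>" using it v by (rule glue_map_in)
  have pa: "\<Phi> i (a i) \<in> {xl, xr}" and pb: "\<Phi> i (b i) \<in> {xl, xr}" using f by auto
  have pab: "\<Phi> i (a i) \<noteq> \<Phi> i (b i)" using inj ab unfolding inj_on_def by blast
  show ?thesis
  proof (cases "v = a i")
    case True
    then show ?thesis using mem pa sig unfolding glue_fun_def glue_map_def by auto
  next
    case False
    note va = False
    show ?thesis
    proof (cases "v = b i")
      case True
      then show ?thesis using mem pa pb pab sig va xl1 unfolding glue_fun_def glue_map_def by auto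
    next
      case False
      then show ?thesis using mem va unfolding glue_fun_def glue_map_def by auto
    qed
  qed
qed

lemma tup_props:
  assumes "\<Phi> \<in> tup t V E a b VG EG xy" "i < t"
  shows "\<Phi> i \<in> embeddings (V i) (E i) VG EG" "\<Phi> i ` {a i, b i} = xy"
    "inj_on (\<Phi> i) (V i)" "\<Phi> i \<in> V i \<rightarrow>\<^sub>E VG" "\<forall>e\<in>E i. \<Phi> i ` e \<in> EG"
  using assms unfolding tup_def embeddings_def by auto

lemma tup_disj:
  assumes "\<Phi> \<in> tup t V E a b VG EG xy" "i < t" "k < t" "i \<noteq> k"
  shows "\<Phi> i ` V i \<inter> \<Phi> k ` V k \<subseteq> xy"
  using assms unfolding tup_def by auto

lemma glue_emb:
  assumes T: "\<Phi> \<in> tup t V E a b VG EG {x0, x1}" and x01: "x0 \<noteq> x1"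
    and gr: "\<forall>i<t. graph (V i) (E i)" and fe: "\<forall>i<t. {a i, b i} \<in> E i"
    and sig: "\<forall>i<t. \<sigma> i = (\<Phi> i (a i) = x0)"
  shows "glue_fun t V a b \<sigma> x0 x1 \<Phi> \<in> embeddings (glue_V t V a b \<sigma>) (glue_E t E a b \<sigma>) VG EG"
proof -
  let ?\<psi> = "glue_fun t V a b \<sigma> x0 x1 \<Phi>"
  have ab: "a i \<noteq> b i" "a i \<in> V i" "b i \<in> V i" if "i < t" for i
    using graph_edge_card[of "V i" "E i" "a i" "b i"] gr fe that by auto
  have eq: "?\<psi> (glue_map a b \<sigma> i v) = \<Phi> i v" if "i < t" "v \<in> V i" for i v
    using glue_fun_eq[where i=i and t=t and V=V and v=v and \<Phi>=\<Phi> and a=a and b=b and xl=x0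
        and xr=x1 and \<sigma>=\<sigma>, OF that tup_props(2)[OF T that(1)] x01 tup_props(3)[OF T that(1)] ab[OF that(1)]]
      sig that(1) by blast
  have pi: "?\<psi> \<in> glue_V t V a b \<sigma> \<rightarrow>\<^sub>E VG"
  proof -
    have "?\<psi> u \<in> VG" if uu: "u \<in> glue_V t V a b \<sigma>" for u
    proof -
      obtain i v where iv: "i < t" "v \<in> V i" "u = glue_map a b \<sigma> i v"
        using uu unfolding glue_V_def by auto
      have "\<Phi> i v \<in> VG" using tup_props(4)[OF T iv(1)] iv(2) by (auto simp: PiE_iff)
      thus ?thesis using eq[OF iv(1,2)] iv(3) by simp
    qed
    thus ?thesis unfolding glue_fun_def by (auto simp: PiE_iff)
  qed
  have inj: "inj_on ?\<psi> (glue_V t V a b \<sigma>)"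
  proof (rule inj_onI)
    fix u1 u2 assume u1: "u1 \<in> glue_V t V a b \<sigma>" and u2: "u2 \<in> glue_V t V a b \<sigma>"
      and equ: "?\<psi> u1 = ?\<psi> u2"
    obtain i v where iv: "i < t" "v \<in> V i" "u1 = glue_map a b \<sigma> i v"
      using u1 unfolding glue_V_def by auto
    obtain k w where kw: "k < t" "w \<in> V k" "u2 = glue_map a b \<sigma> k w"
      using u2 unfolding glue_V_def by auto
    have PP: "\<Phi> i v = \<Phi> k w" using equ eq[OF iv(1,2)] eq[OF kw(1,2)] iv(3) kw(3) by simp
    show "u1 = u2"
    proof (cases "i = k")
      case True
      then show ?thesis using PP tup_props(3)[OF T iv(1)] iv kw unfolding inj_on_def by auto
    next
      case False
      have inI: "\<Phi> i v \<in> \<Phi> i ` V i \<inter> \<Phi> k ` V k" using PP iv(2) kw(2) by (metis IntI imageI)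
      have "\<Phi> i v \<in> {x0, x1}" using tup_disj[OF T iv(1) kw(1) False] inI by (rule subsetD)
      hence "\<Phi> i v \<in> \<Phi> i ` {a i, b i}" using tup_props(2)[OF T iv(1)] by simp
      hence vab: "v \<in> {a i, b i}" using tup_props(3)[OF T iv(1)] iv(2) ab[OF iv(1)]
        unfolding inj_on_def by blast
      have "\<Phi> k w \<in> {x0, x1}" using \<open>\<Phi> i v \<in> {x0, x1}\<close> PP by simp
      hence "\<Phi> k w \<in> \<Phi> k ` {a k, b k}" using tup_props(2)[OF T kw(1)] by simp
      hence wab: "w \<in> {a k, b k}" using tup_props(3)[OF T kw(1)] kw(2) ab[OF kw(1)]
        unfolding inj_on_def by blast
      have "\<exists>\<beta>. u1 = Inl \<beta>" using vab iv(3) unfolding glue_map_def by (auto split: if_splits)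
      then obtain \<beta>1 where b1: "u1 = Inl \<beta>1" by blast
      have "\<exists>\<beta>. u2 = Inl \<beta>" using wab kw(3) unfolding glue_map_def by (auto split: if_splits)
      then obtain \<beta>2 where b2: "u2 = Inl \<beta>2" by blast
      have "(if \<beta>1 then x0 else x1) = (if \<beta>2 then x0 else x1)"
        using equ glue_fun_Inl[of \<beta>1 t V a b \<sigma> x0 x1 \<Phi>] glue_fun_Inl[of \<beta>2 t V a b \<sigma> x0 x1 \<Phi>]
          u1 u2 b1 b2 by simp
      hence "\<beta>1 = \<beta>2" using x01 by (auto split: if_splits)
      thus ?thesis using b1 b2 by simp
    qed
  qed
  have edges: "\<forall>e\<in>glue_E t E a b \<sigma>. ?\<psi> ` e \<in> VG'" if "VG' = EG" for VG'
  proof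
    fix e assume "e \<in> glue_E t E a b \<sigma>"
    then obtain i e0 where ie: "i < t" "e0 \<in> E i" "e = glue_map a b \<sigma> i ` e0"
      unfolding glue_E_def by auto
    have e0V: "e0 \<subseteq> V i" using gr ie unfolding graph_def by auto
    have "?\<psi> ` e = \<Phi> i ` e0"
      unfolding ie(3) image_image using eq[OF ie(1)] e0V by (auto intro!: image_cong)
    thus "?\<psi> ` e \<in> VG'" using tup_props(5)[OF T ie(1)] ie(2) that by auto
  qed
  show ?thesis unfolding embeddings_def using pi inj edges by auto
qed




lemma glue_recover:
  assumes T: "\<Phi> \<in> tup t V E a b VG EG {x0, x1}" and x01: "x0 \<noteq> x1"
    and gr: "\<forall>i<t. graph (V i) (E i)" and fe: "\<forall>i<t. {a i, b i} \<in> E i"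
    and sig: "\<forall>i<t. \<sigma> i = (\<Phi> i (a i) = x0)"
  shows "(\<lambda>i. if i < t then restrict (\<lambda>v. glue_fun t V a b \<sigma> x0 x1 \<Phi> (glue_map a b \<sigma> i v)) (V i)
            else undefined) = \<Phi>"
proof
  fix i
  have ab: "a i \<noteq> b i" "a i \<in> V i" "b i \<in> V i" if "i < t" for i
    using graph_edge_card[of "V i" "E i" "a i" "b i"] gr fe that by auto
  show "(if i < t then restrict (\<lambda>v. glue_fun t V a b \<sigma> x0 x1 \<Phi> (glue_map a b \<sigma> i v)) (V i)
            else undefined) = \<Phi> i"
  proof (cases "i < t")
    case True
    have ext: "\<Phi> i \<in> extensional (V i)" using tup_props(4)[OF T True] by (simp add: PiE_iff)
    show ?thesis
    proof
      fix v
      show "(if i < t then restrict (\<lambda>v. glue_fun t V a b \<sigma> x0 x1 \<Phi> (glue_map a b \<sigma> i v)) (V i)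
            else undefined) v = \<Phi> i v"
      proof (cases "v \<in> V i")
        case True
        have "glue_fun t V a b \<sigma> x0 x1 \<Phi> (glue_map a b \<sigma> i v) = \<Phi> i v"
          using glue_fun_eq[where i=i and t=t and V=V and v=v and \<Phi>=\<Phi> and a=a and b=b and xl=x0
            and xr=x1 and \<sigma>=\<sigma>, OF \<open>i < t\<close> True tup_props(2)[OF T \<open>i<t\<close>] x01
            tup_props(3)[OF T \<open>i<t\<close>] ab[OF \<open>i<t\<close>]] sig \<open>i<t\<close> by blast
        then show ?thesis using True \<open>i<t\<close> by simp
      next
        case False
        then show ?thesis using ext \<open>i<t\<close> unfolding extensional_def by simp
      qed
    qed
  next
    case False
    have "\<Phi> \<in> extensional {..<t}" using T unfolding tup_def by (simp add: PiE_iff)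
    then show ?thesis using False unfolding extensional_def by simp
  qed
qed

lemma Inl_in_glue_V:
  assumes t1: "t \<ge> 1" and gr: "\<forall>i<t. graph (V i) (E i)" and fe: "\<forall>i<t. {a i, b i} \<in> E i"
  shows "Inl \<beta> \<in> glue_V t V a b \<sigma>"
proof -
  have ab: "a 0 \<noteq> b 0" "a 0 \<in> V 0" "b 0 \<in> V 0"
    using graph_edge_card[of "V 0" "E 0" "a 0" "b 0"] gr fe t1 by auto
  have "glue_map a b \<sigma> 0 (a 0) \<in> glue_V t V a b \<sigma>" "glue_map a b \<sigma> 0 (b 0) \<in> glue_V t V a b \<sigma>"
    using t1 ab by (auto intro: glue_map_in)
  hence "Inl (\<sigma> 0) \<in> glue_V t V a b \<sigma>" "Inl (\<not> \<sigma> 0) \<in> glue_V t V a b \<sigma>"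
    using ab unfolding glue_map_def by auto
  thus ?thesis by (cases "\<beta> = \<sigma> 0") auto
qed

lemma glue_map_inj:
  assumes "a i \<noteq> b i"
  shows "inj_on (glue_map a b \<sigma> i) (V i)"
  using assms unfolding glue_map_def inj_on_def by (auto split: if_splits)

lemma finite_glue_V:
  assumes "\<forall>i<t. finite (V i)"
  shows "finite (glue_V t V a b \<sigma>)"
  using assms unfolding glue_V_def by auto

lemma glue_V_card:
  assumes gr: "\<forall>i<t. graph (V i) (E i)" and fe: "\<forall>i<t. {a i, b i} \<in> E i"
  shows "card (glue_V t V a b \<sigma>) \<le> 2 + (\<Sum>i<t. (card (V i) - 2))"
proof -
  have ab: "a i \<noteq> b i" "a i \<in> V i" "b i \<in> V i" if "i < t" for i
    using graph_edge_card[of "V i" "E i" "a i" "b i"] gr fe that by auto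
  have finV: "finite (V i)" if "i < t" for i using gr that unfolding graph_def by auto
  have sub: "glue_V t V a b \<sigma> \<subseteq> {Inl True, Inl False} \<union> (\<Union>i<t. glue_map a b \<sigma> i ` (V i - {a i, b i}))"
    unfolding glue_V_def glue_map_def by auto
  have "card (glue_V t V a b \<sigma>) \<le> card ({Inl True, Inl False} \<union> (\<Union>i<t. glue_map a b \<sigma> i ` (V i - {a i, b i})))"
    using sub finV by (intro card_mono) auto
  also have "\<dots> \<le> card {Inl True, Inl False :: bool + nat \<times> nat} + card (\<Union>i<t. glue_map a b \<sigma> i ` (V i - {a i, b i}))"
    by (rule card_Un_le)
  also have "\<dots> \<le> 2 + (\<Sum>i<t. card (glue_map a b \<sigma> i ` (V i - {a i, b i})))"
    using card_UN_le[of "{..<t}" "\<lambda>i. glue_map a b \<sigma> i ` (V i - {a i, b i})"] by simp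
  also have "\<dots> \<le> 2 + (\<Sum>i<t. (card (V i) - 2))"
  proof -
    have "card (glue_map a b \<sigma> i ` (V i - {a i, b i})) \<le> card (V i) - 2" if "i < t" for i
    proof -
      have "card (glue_map a b \<sigma> i ` (V i - {a i, b i})) \<le> card (V i - {a i, b i})"
        by (rule card_image_le) (use finV that in auto)
      also have "\<dots> = card (V i) - card {a i, b i}"
        using ab[OF that] finV[OF that] by (intro card_Diff_subset) auto
      finally show ?thesis using ab[OF that] by simp
    qed
    thus ?thesis by (intro add_left_mono sum_mono) auto
  qed
  finally show ?thesis .
qed

lemma edge_has_other:
  assumes gr: "graph Vi Ei" and e: "e \<in> Ei" and ne: "e \<noteq> {x, y}"
  shows "\<exists>v\<in>e. v \<notin> {x, y}"
proof (rule ccontr)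
  assume "\<not> ?thesis"
  hence sub: "e \<subseteq> {x, y}" by auto
  have c2: "card e = 2" using gr e unfolding graph_def by auto
  have "card {x, y} \<le> 2" by (simp add: card_insert_if)
  hence "e = {x, y}" using card_subset_eq[of "{x,y}" e] sub c2 card_mono[of "{x,y}" e] by simp
  thus False using ne by simp
qed

lemma glue_E_card:
  assumes t1: "t \<ge> 1" and gr: "\<forall>i<t. graph (V i) (E i)" and fe: "\<forall>i<t. {a i, b i} \<in> E i"
  shows "1 + (\<Sum>i<t. (card (E i) - 1)) \<le> card (glue_E t E a b \<sigma>)"
proof -
  have ab: "a i \<noteq> b i" "a i \<in> V i" "b i \<in> V i" if "i < t" for i
    using graph_edge_card[of "V i" "E i" "a i" "b i"] gr fe that by auto
  have finV: "finite (V i)" if "i < t" for i using gr that unfolding graph_def by auto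
  have finE: "finite (E i)" if "i < t" for i using gr that graph_finite_E by auto
  define img where "img = (\<lambda>i. (\<lambda>e. glue_map a b \<sigma> i ` e) ` (E i - {{a i, b i}}))"
  define ce where "ce = {Inl True, Inl False :: bool + nat \<times> nat}"
  have hasInr: "\<exists>v. Inr (i, v) \<in> X" if hi: "i < t" "X \<in> img i" for i X
  proof -
    obtain e where e: "e \<in> E i" "e \<noteq> {a i, b i}" "X = glue_map a b \<sigma> i ` e"
      using hi unfolding img_def by auto
    obtain v where "v \<in> e" "v \<notin> {a i, b i}" using edge_has_other[of "V i" "E i" e] gr e hi by blast
    hence "Inr (i, v) \<in> X" using e unfolding glue_map_def by force
    thus ?thesis by blast
  qed
  have onlyk: "\<And>u. u \<in> X \<Longrightarrow> (\<exists>\<beta>. u = Inl \<beta>) \<or> (\<exists>w. u = Inr (k, w))" if "X \<in> img k" for k X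
    using that unfolding img_def glue_map_def by auto
  have disj: "img i \<inter> img k = {}" if ik: "i < t" "k < t" "i \<noteq> k" for i k
  proof (rule ccontr)
    assume "img i \<inter> img k \<noteq> {}"
    then obtain X where X: "X \<in> img i" "X \<in> img k" by auto
    obtain v where "Inr (i, v) \<in> X" using hasInr[OF ik(1) X(1)] by blast
    thus False using onlyk[OF X(2)] ik(3) by blast
  qed
  have ceno: "ce \<notin> img i" if it: "i < t" for i
  proof
    assume "ce \<in> img i"
    then obtain v where "Inr (i, v) \<in> ce" using hasInr[OF it] by blast
    thus False unfolding ce_def by auto
  qed
  have cimg: "card (img i) = card (E i) - 1" if "i < t" for i
  proof -
    have "inj_on ((`) (glue_map a b \<sigma> i)) (Pow (V i))"
      by (rule inj_on_image_Pow[OF glue_map_inj[where a=a and b=b and i=i and \<sigma>=\<sigma> and V=V, OF ab(1)[OF that]]])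
    moreover have "E i - {{a i, b i}} \<subseteq> Pow (V i)" using gr that unfolding graph_def by auto
    ultimately have "inj_on ((`) (glue_map a b \<sigma> i)) (E i - {{a i, b i}})" by (rule inj_on_subset)
    hence "card (img i) = card (E i - {{a i, b i}})" unfolding img_def by (rule card_image)
    also have "\<dots> = card (E i) - 1" using fe that finE[OF that] by simp
    finally show ?thesis .
  qed
  have finimg: "finite (img i)" if "i < t" for i unfolding img_def using finE[OF that] by auto
  have sub: "insert ce (\<Union>i<t. img i) \<subseteq> glue_E t E a b \<sigma>"
  proof -
    have "ce = glue_map a b \<sigma> 0 ` {a 0, b 0}"
      using ab[of 0] t1 unfolding ce_def glue_map_def by auto
    moreover have "glue_map a b \<sigma> 0 ` {a 0, b 0} \<in> (\<lambda>e. glue_map a b \<sigma> 0 ` e) ` E 0"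
      using fe t1 by (intro imageI) auto
    ultimately have "ce \<in> (\<lambda>e. glue_map a b \<sigma> 0 ` e) ` E 0" by simp
    hence "ce \<in> glue_E t E a b \<sigma>" unfolding glue_E_def using t1 by (intro UN_I[of 0]) auto
    moreover have "(\<Union>i<t. img i) \<subseteq> glue_E t E a b \<sigma>" unfolding img_def glue_E_def by auto
    ultimately show ?thesis by auto
  qed
  have fgE: "finite (glue_E t E a b \<sigma>)" unfolding glue_E_def using finE by auto
  have "card (insert ce (\<Union>i<t. img i)) = 1 + card (\<Union>i<t. img i)"
    using ceno finimg by (subst card_insert_disjoint) auto
  also have "card (\<Union>i<t. img i) = (\<Sum>i<t. card (img i))"
    using finimg disj by (intro card_UN_disjoint) auto
  also have "\<dots> = (\<Sum>i<t. (card (E i) - 1))" using cimg by (intro sum.cong) auto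
  finally have "card (insert ce (\<Union>i<t. img i)) = 1 + (\<Sum>i<t. (card (E i) - 1))" .
  moreover have "card (insert ce (\<Union>i<t. img i)) \<le> card (glue_E t E a b \<sigma>)"
    using sub fgE by (rule card_mono[rotated])
  ultimately show ?thesis by simp
qed

lemma copies_iso_le:
  fixes V1 :: "'a set" and E1 :: "'a set set" and V2 :: "'b set" and E2 :: "'b set set"
    and VG :: "'c set" and EG :: "'c set set"
  assumes iso: "graph_iso V1 E1 V2 E2" and sub: "\<forall>e\<in>E1. e \<subseteq> V1"
    and fin1: "finite V1" and finG: "finite VG"
  shows "copies V2 E2 VG EG \<le> copies V1 E1 VG EG"
proof -
  obtain \<beta> where bij: "bij_betw \<beta> V1 V2" and im: "(\<lambda>e. \<beta> ` e) ` E1 = E2"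
    using iso unfolding graph_iso_def by blast
  define h where "h = (\<lambda>\<psi>::'b \<Rightarrow> 'c. restrict (\<psi> \<circ> \<beta>) V1)"
  have img: "h ` embeddings V2 E2 VG EG \<subseteq> embeddings V1 E1 VG EG"
  proof
    fix \<chi> assume "\<chi> \<in> h ` embeddings V2 E2 VG EG"
    then obtain \<psi> where \<psi>: "\<psi> \<in> embeddings V2 E2 VG EG" and ch: "\<chi> = h \<psi>" by auto
    have p1: "\<psi> \<in> V2 \<rightarrow>\<^sub>E VG" "inj_on \<psi> V2" "\<forall>e\<in>E2. \<psi> ` e \<in> EG"
      using \<psi> unfolding embeddings_def by auto
    have bV: "\<beta> v \<in> V2" if "v \<in> V1" for v using bij that unfolding bij_betw_def by auto
    have "\<chi> \<in> V1 \<rightarrow>\<^sub>E VG" unfolding ch h_def using p1(1) bV by (auto simp: PiE_iff)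
    moreover have "inj_on \<chi> V1"
    proof -
      have "inj_on (\<psi> \<circ> \<beta>) V1"
        using bij p1(2) unfolding bij_betw_def by (intro comp_inj_on) auto
      thus ?thesis unfolding ch h_def inj_on_def by auto
    qed
    moreover have "\<forall>e\<in>E1. \<chi> ` e \<in> EG"
    proof
      fix e assume e: "e \<in> E1"
      have "\<chi> ` e = \<psi> ` (\<beta> ` e)" unfolding ch h_def using sub e by auto
      moreover have "\<beta> ` e \<in> E2" using im e by auto
      ultimately show "\<chi> ` e \<in> EG" using p1(3) by auto
    qed
    ultimately show "\<chi> \<in> embeddings V1 E1 VG EG" unfolding embeddings_def by auto
  qed
  have inj: "inj_on h (embeddings V2 E2 VG EG)"
  proof (rule inj_onI)
    fix \<psi> \<psi>' assume \<psi>: "\<psi> \<in> embeddings V2 E2 VG EG" and \<psi>': "\<psi>' \<in> embeddings V2 E2 VG EG"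
      and eq: "h \<psi> = h \<psi>'"
    have e1: "\<psi> \<in> extensional V2" "\<psi>' \<in> extensional V2"
      using \<psi> \<psi>' unfolding embeddings_def by (auto simp: PiE_iff)
    have "\<psi> u = \<psi>' u" if uV: "u \<in> V2" for u
    proof -
      obtain v where "v \<in> V1" "u = \<beta> v" using bij uV unfolding bij_betw_def by auto
      thus ?thesis using fun_cong[OF eq, of v] unfolding h_def by simp
    qed
    thus "\<psi> = \<psi>'" using e1 by (intro extensionalityI) auto
  qed
  show ?thesis unfolding copies_def
    using card_inj_on_le[OF inj img] finite_embeddings[OF fin1 finG] by simp
qed




definition sV :: "nat \<Rightarrow> (nat \<Rightarrow> nat set) \<Rightarrow> nat" where
  "sV t V = (\<Sum>i<t. card (V i))"

definition cf :: "nat \<Rightarrow> (nat \<Rightarrow> nat set) \<Rightarrow> (nat \<Rightarrow> real) \<Rightarrow> nat \<Rightarrow> real" where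
  "cf t V A i = 2 * real t * 2^(3 + sV t V) * max (A i) 0"

definition Kc :: "nat \<Rightarrow> (nat \<Rightarrow> nat set) \<Rightarrow> (nat \<Rightarrow> real) \<Rightarrow> real" where
  "Kc t V A = 2 * real (sV t V) + 1 + (\<Sum>i<t. cf t V A i)"

definition dl :: "nat \<Rightarrow> (nat \<Rightarrow> nat set) \<Rightarrow> (nat \<Rightarrow> nat set set) \<Rightarrow> (nat \<Rightarrow> real) \<Rightarrow> nat \<Rightarrow> real" where
  "dl t V E eta i = eta i / (2 * (2 * real t * 2^(3 + sV t V))^card (E i) * 4^card (V i))"

definition tau :: "nat \<Rightarrow> (nat \<Rightarrow> nat set) \<Rightarrow> (nat \<Rightarrow> nat set set) \<Rightarrow> (nat \<Rightarrow> real) \<Rightarrow> nat \<Rightarrow> real \<Rightarrow> nat \<Rightarrow> real" where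
  "tau t V E eta i p n = dl t V E eta i * p^(card (E i) - 1) * real n^(card (V i) - 2)"

lemma Kc_ge: "t \<ge> 1 \<Longrightarrow> Kc t V A \<ge> 1" and cf_nonneg: "t \<ge> 1 \<Longrightarrow> cf t V A i \<ge> 0"
proof -
  assume t: "t \<ge> 1"
  show c: "cf t V A i \<ge> 0" for i unfolding cf_def by simp
  have "(\<Sum>i<t. cf t V A i) \<ge> 0" using c by (intro sum_nonneg) auto
  thus "Kc t V A \<ge> 1" unfolding Kc_def by simp
qed

lemma cf_le_Kc: "t \<ge> 1 \<Longrightarrow> i < t \<Longrightarrow> cf t V A i \<le> Kc t V A"
proof -
  assume t: "t \<ge> 1" and i: "i < t"
  have "cf t V A i \<le> (\<Sum>i<t. cf t V A i)"
    using i cf_nonneg[OF t] by (intro member_le_sum) auto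
  thus ?thesis unfolding Kc_def by simp
qed

lemma good_edges:
  fixes VG :: "nat set" and EG :: "nat set set" and t :: nat
    and V :: "nat \<Rightarrow> nat set" and E :: "nat \<Rightarrow> nat set set"
    and a b :: "nat \<Rightarrow> nat" and al A eta :: "nat \<Rightarrow> real"
  assumes t1: "t \<ge> 1"
    and gr: "\<forall>i<t. graph (V i) (E i)"
    and alr: "\<forall>i<t. 0 \<le> al i \<and> al i < 1"
    and etap: "\<forall>i<t. eta i > 0"
    and ES: "\<forall>i<t. ES_good (al i) (A i) (eta i) (V i) (E i)"
    and fe: "\<forall>i<t. {a i, b i} \<in> E i"
    and gG: "graph VG EG" and cV: "card VG = n" and npos: "n > 0"
    and big: "real (card EG) \<ge> Kc t V A * real n powr (1 + Max (al ` {..<t}))"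
  shows "\<exists>Good \<subseteq> EG. real (card Good) \<ge> real (card EG) / 2 \<and> card EG > 0 \<and>
     (\<forall>xy\<in>Good. \<forall>i<t. \<forall>C. C \<subseteq> VG \<and> card C \<le> sV t V \<and> C \<inter> xy = {} \<longrightarrow>
        real (card (emb_at (V i) (E i) (a i) (b i) VG EG xy C)) \<ge>
          tau t V E eta i (real (card EG) / real n ^ 2) n)"
proof -
  define \<alpha> where "\<alpha> = Max (al ` {..<t})"
  define e where "e = real (card EG)"
  define s where "s = sV t V"
  define K where "K = Kc t V A"
  define L where "L = 2 * real t"
  have ali: "al i \<le> \<alpha>" if "i < t" for i unfolding \<alpha>_def using that by (intro Max_ge) auto
  have al0: "0 \<le> \<alpha>" using ali[of 0] alr t1 by force
  have n1: "real n \<ge> 1" using npos by simp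
  have K1: "K \<ge> 1" unfolding K_def by (rule Kc_ge[OF t1])
  have pw1: "real n powr (1 + \<alpha>) \<ge> 1" using n1 al0 by (simp add: ge_one_powr_ge_zero)
  have eK: "e \<ge> K * real n powr (1 + \<alpha>)" using big unfolding e_def K_def \<alpha>_def by simp
  have epos: "e > 0"
  proof -
    have "K * real n powr (1 + \<alpha>) \<ge> 1 * 1" using K1 pw1 by (intro mult_mono) auto
    thus ?thesis using eK by linarith
  qed
  have fEG: "finite EG" by (rule graph_finite_E[OF gG])
  have cEG: "card EG > 0" using epos unfolding e_def by simp
  have en2: "e \<le> real n ^ 2" unfolding e_def using card_edges_le[OF gG] cV
    by (metis of_nat_le_iff of_nat_power)
  have Kn: "K \<le> real n"
  proof -
    have "real n ^ 2 = real n powr (1 + \<alpha>) * real n powr (1 - \<alpha>)"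
    proof -
      have "real n ^ 2 = real n powr (real 2)" using n1 by (simp add: powr_realpow)
      also have "real 2 = (1 + \<alpha>) + (1 - \<alpha>)" by simp
      also have "real n powr ((1 + \<alpha>) + (1 - \<alpha>)) = real n powr (1 + \<alpha>) * real n powr (1 - \<alpha>)"
        by (rule powr_add)
      finally show ?thesis .
    qed
    hence "K * real n powr (1 + \<alpha>) \<le> real n powr (1 + \<alpha>) * real n powr (1 - \<alpha>)" using eK en2 by linarith
    hence "K * real n powr (1 + \<alpha>) \<le> real n powr (1 - \<alpha>) * real n powr (1 + \<alpha>)"
      by (simp add: mult.commute)
    hence "K \<le> real n powr (1 - \<alpha>)" by (rule mult_right_le_imp_le) (use pw1 npos in simp)
    also have "\<dots> \<le> real n powr 1" using n1 al0 by (intro powr_mono) auto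
    finally show ?thesis using n1 by simp
  qed
  have ns: "2 * s \<le> n"
  proof -
    have "2 * real s + 1 \<le> K" unfolding K_def Kc_def s_def
      using sum_nonneg[of "{..<t}" "cf t V A"] cf_nonneg[OF t1] by auto
    thus ?thesis using Kn by linarith
  qed
  define B where "B = (\<lambda>i. {xy\<in>EG. \<exists>C. C \<subseteq> VG \<and> card C \<le> s \<and> C \<inter> xy = {} \<and>
           real (card (emb_at (V i) (E i) (a i) (b i) VG EG xy C)) <
             eta i / (2 * (L*2^(3+s))^card (E i) * 4^card (V i)) * (real (card EG) / real n^2)^(card (E i) - 1)
               * real n^(card (V i) - 2)})"
  have Bsmall: "real (card (B i)) < e / L" if it: "i < t" for i
  proof -
    have bigi: "real (card EG) \<ge> L * 2^(3+s) * max (A i) 0 * real n powr (1 + al i)"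
    proof -
      have "L * 2^(3+s) * max (A i) 0 = cf t V A i" unfolding cf_def L_def s_def by simp
      hence "L * 2^(3+s) * max (A i) 0 * real n powr (1 + al i) \<le> K * real n powr (1 + \<alpha>)"
        using cf_le_Kc[OF t1 it, of V A] cf_nonneg[OF t1, of V A i] ali[OF it] n1
        unfolding K_def by (intro mult_mono powr_mono) auto
      thus ?thesis using eK unfolding e_def by linarith
    qed
    have Ene: "EG \<noteq> {}" using cEG by auto
    show ?thesis unfolding B_def e_def
      using key[OF gG cV npos Ene gr[rule_format, OF it] fe[rule_format, OF it] etap[rule_format, OF it]
          ES[rule_format, OF it], of L s] bigi ns alr it t1 unfolding L_def by auto
  qed
  define Good where "Good = EG - (\<Union>i<t. B i)"
  have BE: "(\<Union>i<t. B i) \<subseteq> EG" unfolding B_def by auto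
  have fB: "finite (B i)" for i using fEG unfolding B_def by auto
  have "real (card (\<Union>i<t. B i)) \<le> (\<Sum>i<t. real (card (B i)))"
    using card_UN_le[of "{..<t}" B] by (metis finite_lessThan of_nat_le_iff of_nat_sum)
  also have "\<dots> < (\<Sum>i<t. e / L)" using Bsmall t1 by (intro sum_strict_mono) (auto simp: lessThan_empty_iff)
  also have "\<dots> = e / 2" unfolding L_def using t1 by simp
  finally have cU: "real (card (\<Union>i<t. B i)) < e / 2" .
  have cG: "card Good = card EG - card (\<Union>i<t. B i)"
    unfolding Good_def using BE fEG by (intro card_Diff_subset) (auto intro: finite_subset)
  have "card (\<Union>i<t. B i) \<le> card EG" using BE fEG by (intro card_mono) auto
  hence "real (card Good) = e - real (card (\<Union>i<t. B i))" unfolding cG e_def by simp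
  hence c1: "real (card Good) \<ge> real (card EG) / 2" using cU unfolding e_def by linarith
  have c2: "\<forall>xy\<in>Good. \<forall>i<t. \<forall>C. C \<subseteq> VG \<and> card C \<le> sV t V \<and> C \<inter> xy = {} \<longrightarrow>
        real (card (emb_at (V i) (E i) (a i) (b i) VG EG xy C)) \<ge>
          tau t V E eta i (real (card EG) / real n ^ 2) n"
  proof (intro ballI allI impI)
    fix xy i C assume xy: "xy \<in> Good" and it: "i < t" and C: "C \<subseteq> VG \<and> card C \<le> sV t V \<and> C \<inter> xy = {}"
    have "xy \<notin> B i" using xy it unfolding Good_def by auto
    moreover have "xy \<in> EG" using xy unfolding Good_def by auto
    ultimately have nb: "\<not> (real (card (emb_at (V i) (E i) (a i) (b i) VG EG xy C)) <
             eta i / (2 * (L*2^(3+s))^card (E i) * 4^card (V i)) * (real (card EG) / real n^2)^(card (E i) - 1)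
               * real n^(card (V i) - 2))"
      using C unfolding B_def s_def by blast
    have "eta i / (2 * (L*2^(3+s))^card (E i) * 4^card (V i)) * (real (card EG) / real n^2)^(card (E i) - 1)
               * real n^(card (V i) - 2) = tau t V E eta i (real (card EG) / real n ^ 2) n"
      unfolding tau_def dl_def L_def s_def by simp
    thus "real (card (emb_at (V i) (E i) (a i) (b i) VG EG xy C)) \<ge>
          tau t V E eta i (real (card EG) / real n ^ 2) n" using nb by linarith
  qed
  have "Good \<subseteq> EG" unfolding Good_def by auto
  thus ?thesis using c1 c2 cEG by blast
qed




lemma tau_pos:
  assumes "t \<ge> 1" "eta i > 0" "p > 0" "n > 0"
  shows "tau t V E eta i p n > 0"
  using assms unfolding tau_def dl_def by simp

lemma two_elem_nat:
  assumes "card (xy :: nat set) = 2"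
  shows "xy = {Min xy, Max xy}" "Min xy \<noteq> Max xy"
proof -
  obtain x y where xy: "xy = {x, y}" "x \<noteq> y" using assms by (auto simp: card_2_iff)
  show "xy = {Min xy, Max xy}" "Min xy \<noteq> Max xy" unfolding xy using xy(2) by (auto simp: min_def max_def)
qed

lemma good_tuples:
  fixes VG :: "nat set" and EG :: "nat set set" and t :: nat
    and V :: "nat \<Rightarrow> nat set" and E :: "nat \<Rightarrow> nat set set"
    and a b :: "nat \<Rightarrow> nat" and eta :: "nat \<Rightarrow> real"
  assumes t1: "t \<ge> 1" and gr: "\<forall>i<t. graph (V i) (E i)"
    and finG: "finite VG"
    and good: "\<forall>i<t. \<forall>C. C \<subseteq> VG \<and> card C \<le> sV t V \<and> C \<inter> xy = {} \<longrightarrow>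
        real (card (emb_at (V i) (E i) (a i) (b i) VG EG xy C)) \<ge> tau t V E eta i p n"
    and taupos: "\<forall>i<t. tau t V E eta i p n \<ge> 0"
  shows "real (card (tup t V E a b VG EG xy)) \<ge> (\<Prod>i<t. tau t V E eta i p n)"
proof -
  have finV: "\<forall>i<t. finite (V i)" using gr unfolding graph_def by auto
  show ?thesis
    using tup_card[where VG=VG and t=t and V=V and E=E and a=a and b=b and EG=EG and xy=xy
        and s="sV t V" and \<tau>="\<lambda>i. tau t V E eta i p n" and j=t, OF finG finV good taupos]
    unfolding sV_def by simp
qed

lemma part1_contains:
  fixes VG :: "nat set" and EG :: "nat set set" and t :: nat
    and V :: "nat \<Rightarrow> nat set" and E :: "nat \<Rightarrow> nat set set"
    and a b :: "nat \<Rightarrow> nat" and al A eta :: "nat \<Rightarrow> real"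
  assumes t1: "t \<ge> 1"
    and gr: "\<forall>i<t. graph (V i) (E i)"
    and alr: "\<forall>i<t. 0 \<le> al i \<and> al i < 1"
    and etap: "\<forall>i<t. eta i > 0"
    and ES: "\<forall>i<t. ES_good (al i) (A i) (eta i) (V i) (E i)"
    and fe: "\<forall>i<t. {a i, b i} \<in> E i"
    and gG: "graph VG EG" and cV: "card VG = n" and npos: "n > 0"
    and big: "real (card EG) \<ge> Kc t V A * real n powr (1 + Max (al ` {..<t}))"
  shows "\<exists>\<sigma>. contains VG EG (glue_V t V a b \<sigma>) (glue_E t E a b \<sigma>)"
proof -
  obtain Good where G: "Good \<subseteq> EG" "real (card Good) \<ge> real (card EG) / 2" "card EG > 0"
     "\<forall>xy\<in>Good. \<forall>i<t. \<forall>C. C \<subseteq> VG \<and> card C \<le> sV t V \<and> C \<inter> xy = {} \<longrightarrow>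
        real (card (emb_at (V i) (E i) (a i) (b i) VG EG xy C)) \<ge>
          tau t V E eta i (real (card EG) / real n ^ 2) n"
    using good_edges[OF t1 gr alr etap ES fe gG cV npos big] by blast
  define p where "p = real (card EG) / real n ^ 2"
  have ppos: "p > 0" unfolding p_def using G(3) npos by simp
  have "real (card EG) / 2 > 0" using G(3) by simp
  hence "real (card Good) > 0" using G(2) by linarith
  hence "card Good > 0" by simp
  then obtain xy where xy: "xy \<in> Good" by (metis card.empty ex_in_conv less_irrefl)
  have xyE: "xy \<in> EG" using xy G(1) by auto
  have c2: "card xy = 2" using xyE gG unfolding graph_def by auto
  define x0 where "x0 = Min xy"
  define x1 where "x1 = Max xy"
  have xy01: "xy = {x0, x1}" "x0 \<noteq> x1" unfolding x0_def x1_def using two_elem_nat[OF c2] by auto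
  have finG: "finite VG" using gG unfolding graph_def by auto
  have tp: "\<forall>i<t. tau t V E eta i p n > 0" using tau_pos t1 etap ppos npos by blast
  have "real (card (tup t V E a b VG EG xy)) \<ge> (\<Prod>i<t. tau t V E eta i p n)"
    by (rule good_tuples[OF t1 gr finG]) (use G(4) xy tp in \<open>auto simp: p_def less_imp_le\<close>)
  moreover have "(\<Prod>i<t. tau t V E eta i p n) > 0" using tp by (intro prod_pos) auto
  ultimately have "card (tup t V E a b VG EG xy) > 0" by linarith
  then obtain \<Phi> where Phi: "\<Phi> \<in> tup t V E a b VG EG {x0, x1}"
    using xy01 by (metis card.empty ex_in_conv less_irrefl)
  define \<sigma> where "\<sigma> = (\<lambda>i. \<Phi> i (a i) = x0)"
  have "glue_fun t V a b \<sigma> x0 x1 \<Phi> \<in> embeddings (glue_V t V a b \<sigma>) (glue_E t E a b \<sigma>) VG EG"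
    by (rule glue_emb[OF Phi xy01(2) gr fe]) (simp add: \<sigma>_def)
  hence "contains VG EG (glue_V t V a b \<sigma>) (glue_E t E a b \<sigma>)" unfolding contains_def by auto
  thus ?thesis by blast
qed




lemma count_lemma:
  fixes VG :: "nat set" and EG :: "nat set set" and t :: nat
    and V :: "nat \<Rightarrow> nat set" and E :: "nat \<Rightarrow> nat set set"
    and a b :: "nat \<Rightarrow> nat" and \<tau> :: "nat \<Rightarrow> real"
  assumes t1: "t \<ge> 1" and gr: "\<forall>i<t. graph (V i) (E i)" and fe: "\<forall>i<t. {a i, b i} \<in> E i"
    and gG: "graph VG EG" and GE: "Good \<subseteq> EG"
    and tg: "\<forall>xy\<in>Good. real (card (tup t V E a b VG EG xy)) \<ge> (\<Prod>i<t. \<tau> i)"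
    and ceq: "\<forall>\<sigma>\<in>PiE {..<t} (\<lambda>_. UNIV). copies (glue_V t V a b \<sigma>) (glue_E t E a b \<sigma>) VG EG = c"
  shows "real (card Good) * (\<Prod>i<t. \<tau> i) \<le> 2^t * real c"
proof -
  have finG: "finite VG" using gG unfolding graph_def by auto
  have finV: "\<forall>i<t. finite (V i)" using gr unfolding graph_def by auto
  have fGood: "finite Good" using GE graph_finite_E[OF gG] finite_subset by auto
  define P where "P = Sigma Good (\<lambda>xy. tup t V E a b VG EG xy)"
  define SS where "SS = PiE {..<t} (\<lambda>_. (UNIV :: bool set))"
  define Q where "Q = Sigma SS (\<lambda>\<sigma>. embeddings (glue_V t V a b \<sigma>) (glue_E t E a b \<sigma>) VG EG)"
  define sg where "sg = (\<lambda>(xy::nat set) (\<Phi>::nat \<Rightarrow> nat \<Rightarrow> nat). restrict (\<lambda>i. \<Phi> i (a i) = Min xy) {..<t})"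
  define h where "h = (\<lambda>(xy, \<Phi>). (sg xy \<Phi>, glue_fun t V a b (sg xy \<Phi>) (Min xy) (Max xy) \<Phi>))"
  have ftup: "finite (tup t V E a b VG EG xy)" for xy using finG finV by (intro tup_finite) auto
  have cP: "real (card P) = (\<Sum>xy\<in>Good. real (card (tup t V E a b VG EG xy)))"
    unfolding P_def using fGood ftup by (simp add: card_SigmaI)
  have P1: "real (card Good) * (\<Prod>i<t. \<tau> i) \<le> real (card P)"
  proof -
    have "(\<Sum>xy\<in>Good. (\<Prod>i<t. \<tau> i)) \<le> (\<Sum>xy\<in>Good. real (card (tup t V E a b VG EG xy)))"
      using tg by (intro sum_mono) auto
    thus ?thesis using cP by simp
  qed
  have fSS: "finite SS" unfolding SS_def by (intro finite_PiE) auto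
  have cSS: "card SS = 2^t" unfolding SS_def by (simp add: card_PiE)
  have femb: "finite (embeddings (glue_V t V a b \<sigma>) (glue_E t E a b \<sigma>) VG EG)" for \<sigma>
    using finite_glue_V[OF finV] finG by (intro finite_embeddings) auto
  have fQ: "finite Q" unfolding Q_def using fSS femb by auto
  have cQ: "card Q = 2^t * c"
  proof -
    have "card Q = (\<Sum>\<sigma>\<in>SS. copies (glue_V t V a b \<sigma>) (glue_E t E a b \<sigma>) VG EG)"
      unfolding Q_def copies_def using fSS femb by (simp add: card_SigmaI)
    also have "\<dots> = (\<Sum>\<sigma>\<in>SS. c)" using ceq unfolding SS_def by (intro sum.cong) auto
    finally show ?thesis using cSS by simp
  qed
  have two: "xy = {Min xy, Max xy}" "Min xy \<noteq> Max xy" if "xy \<in> Good" for xy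
  proof -
    have "card xy = 2" using that GE gG unfolding graph_def by auto
    thus "xy = {Min xy, Max xy}" "Min xy \<noteq> Max xy" using two_elem_nat by auto
  qed
  have sig: "\<forall>i<t. sg xy \<Phi> i = (\<Phi> i (a i) = Min xy)" for xy \<Phi> unfolding sg_def by simp
  have img: "h ` P \<subseteq> Q"
  proof
    fix q assume "q \<in> h ` P"
    then obtain xy \<Phi> where xy: "xy \<in> Good" and Phi: "\<Phi> \<in> tup t V E a b VG EG xy" and q: "q = h (xy, \<Phi>)"
      unfolding P_def by auto
    have Phi': "\<Phi> \<in> tup t V E a b VG EG {Min xy, Max xy}" using Phi two[OF xy] by simp
    have "glue_fun t V a b (sg xy \<Phi>) (Min xy) (Max xy) \<Phi>
          \<in> embeddings (glue_V t V a b (sg xy \<Phi>)) (glue_E t E a b (sg xy \<Phi>)) VG EG"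
      by (rule glue_emb[OF Phi' two(2)[OF xy] gr fe sig[of xy \<Phi>]])
    moreover have "sg xy \<Phi> \<in> SS" unfolding SS_def sg_def by auto
    ultimately show "q \<in> Q" unfolding q h_def Q_def by auto
  qed
  have inj: "inj_on h P"
  proof (rule inj_onI)
    fix q1 q2 assume q1: "q1 \<in> P" and q2: "q2 \<in> P" and eq: "h q1 = h q2"
    obtain xy \<Phi> where xy: "xy \<in> Good" and Phi: "\<Phi> \<in> tup t V E a b VG EG xy" and q1e: "q1 = (xy, \<Phi>)"
      using q1 unfolding P_def by auto
    obtain xy' \<Phi>' where xy': "xy' \<in> Good" and Phi': "\<Phi>' \<in> tup t V E a b VG EG xy'" and q2e: "q2 = (xy', \<Phi>')"
      using q2 unfolding P_def by auto
    have s_eq: "sg xy \<Phi> = sg xy' \<Phi>'" using eq unfolding q1e q2e h_def by simp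
    define \<sigma> where "\<sigma> = sg xy \<Phi>"
    have g_eq: "glue_fun t V a b \<sigma> (Min xy) (Max xy) \<Phi> = glue_fun t V a b \<sigma> (Min xy') (Max xy') \<Phi>'"
      using eq s_eq unfolding q1e q2e h_def \<sigma>_def by simp
    have P1: "\<Phi> \<in> tup t V E a b VG EG {Min xy, Max xy}" using Phi two[OF xy] by simp
    have P2: "\<Phi>' \<in> tup t V E a b VG EG {Min xy', Max xy'}" using Phi' two[OF xy'] by simp
    have sig1: "\<forall>i<t. \<sigma> i = (\<Phi> i (a i) = Min xy)" using sig unfolding \<sigma>_def by simp
    have sig2: "\<forall>i<t. \<sigma> i = (\<Phi>' i (a i) = Min xy')" using sig s_eq unfolding \<sigma>_def by simp
    note r1 = glue_recover[OF P1 two(2)[OF xy] gr fe sig1]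
    note r2 = glue_recover[OF P2 two(2)[OF xy'] gr fe sig2]
    have "\<Phi> = \<Phi>'" using r1 r2 g_eq by metis
    moreover have "Min xy = Min xy'"
    proof -
      have IT: "Inl True \<in> glue_V t V a b \<sigma>" by (rule Inl_in_glue_V[OF t1 gr fe])
      have "glue_fun t V a b \<sigma> (Min xy) (Max xy) \<Phi> (Inl True) = Min xy" using glue_fun_Inl[OF IT] by simp
      moreover have "glue_fun t V a b \<sigma> (Min xy') (Max xy') \<Phi>' (Inl True) = Min xy'" using glue_fun_Inl[OF IT] by simp
      ultimately show ?thesis using g_eq by simp
    qed
    moreover have "Max xy = Max xy'"
    proof -
      have IT: "Inl False \<in> glue_V t V a b \<sigma>" by (rule Inl_in_glue_V[OF t1 gr fe])
      have "glue_fun t V a b \<sigma> (Min xy) (Max xy) \<Phi> (Inl False) = Max xy" using glue_fun_Inl[OF IT] by simp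
      moreover have "glue_fun t V a b \<sigma> (Min xy') (Max xy') \<Phi>' (Inl False) = Max xy'" using glue_fun_Inl[OF IT] by simp
      ultimately show ?thesis using g_eq by simp
    qed
    ultimately show "q1 = q2" unfolding q1e q2e using two[OF xy] two[OF xy'] by metis
  qed
  have "card P \<le> card Q" using card_inj_on_le[OF inj img fQ] .
  hence "real (card P) \<le> 2^t * real c" using cQ by (metis of_nat_le_iff of_nat_mult of_nat_numeral of_nat_power)
  thus ?thesis using P1 by linarith
qed




lemma final_arith:
  fixes p nn c cG :: real and t :: nat and ee vv :: "nat \<Rightarrow> nat" and d \<tau> :: "nat \<Rightarrow> real"
    and EG VG :: nat
  assumes p0: "p > 0" and p1: "p \<le> 1" and n1: "nn \<ge> 1"
    and cG: "cG \<ge> p * nn^2 / 2" and cnt: "cG * (\<Prod>i<t. \<tau> i) \<le> 2^t * c"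
    and tau: "\<forall>i<t. \<tau> i = d i * p^(ee i - 1) * nn^(vv i - 2)"
    and ee: "\<forall>i<t. ee i \<ge> 1" and vv: "\<forall>i<t. vv i \<ge> 2" and d: "\<forall>i<t. d i > 0"
    and EG: "EG \<ge> 1 + (\<Sum>i<t. (ee i - 1))" and VG: "VG \<le> 2 + (\<Sum>i<t. (vv i - 2))"
  shows "(\<Prod>i<t. d i) / 2^(t+1) * p^EG * nn^VG \<le> c"
proof -
  define S1 where "S1 = (\<Sum>i<t. (ee i - 1))"
  define S2 where "S2 = (\<Sum>i<t. (vv i - 2))"
  define D where "D = (\<Prod>i<t. d i)"
  have Dp: "D > 0" unfolding D_def using d by (intro prod_pos) auto
  have pt: "(\<Prod>i<t. \<tau> i) = D * p^S1 * nn^S2"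
  proof -
    have "(\<Prod>i<t. \<tau> i) = (\<Prod>i<t. d i * p^(ee i - 1) * nn^(vv i - 2))" using tau by (intro prod.cong) auto
    also have "\<dots> = D * (\<Prod>i<t. p^(ee i - 1)) * (\<Prod>i<t. nn^(vv i - 2))"
      unfolding D_def by (simp add: prod.distrib)
    also have "\<dots> = D * p^S1 * nn^S2" unfolding S1_def S2_def by (simp add: power_sum)
    finally show ?thesis .
  qed
  have ptpos: "(\<Prod>i<t. \<tau> i) \<ge> 0" unfolding pt using Dp p0 n1 by simp
  have "p * nn^2 / 2 * (\<Prod>i<t. \<tau> i) \<le> cG * (\<Prod>i<t. \<tau> i)" using cG ptpos by (rule mult_right_mono)
  hence A: "p * nn^2 / 2 * (D * p^S1 * nn^S2) \<le> 2^t * c" using cnt pt by simp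
  have B: "p * nn^2 / 2 * (D * p^S1 * nn^S2) = D / 2 * p^(1 + S1) * nn^(2 + S2)"
    by (simp add: power_add field_simps power2_eq_square)
  have pE: "p^EG \<le> p^(1 + S1)" using EG p0 p1 unfolding S1_def by (intro power_decreasing) auto
  have nV: "nn^VG \<le> nn^(2 + S2)" using VG n1 unfolding S2_def by (intro power_increasing) auto
  have "D / 2^(t+1) * p^EG * nn^VG \<le> D / 2^(t+1) * p^(1 + S1) * nn^(2 + S2)"
    using pE nV Dp p0 n1 by (intro mult_mono mult_left_mono) auto
  also have "\<dots> = (D / 2 * p^(1 + S1) * nn^(2 + S2)) / 2^t" by (simp add: field_simps)
  also have "\<dots> \<le> c"
  proof -
    have A': "D / 2 * p^(1 + S1) * nn^(2 + S2) \<le> 2^t * c" using A unfolding B .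
    show ?thesis using A' by (subst pos_divide_le_eq) (auto simp: mult.commute)
  qed
  finally show ?thesis unfolding D_def .
qed


lemma glue_E_nonempty:
  assumes t1: "t \<ge> 1" and gr: "\<forall>i<t. graph (V i) (E i)" and fe: "\<forall>i<t. {a i, b i} \<in> E i"
  shows "glue_E t E a b \<sigma> \<noteq> {}"
proof -
  have "1 \<le> card (glue_E t E a b \<sigma>)" using glue_E_card[OF t1 gr fe, of \<sigma>] by linarith
  thus ?thesis by auto
qed

lemma glue_E_sub:
  assumes gr: "\<forall>i<t. graph (V i) (E i)"
  shows "\<forall>e\<in>glue_E t E a b \<sigma>. e \<subseteq> glue_V t V a b \<sigma>"
proof
  fix e assume "e \<in> glue_E t E a b \<sigma>"
  then obtain i e0 where ie: "i < t" "e0 \<in> E i" "e = glue_map a b \<sigma> i ` e0"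
    unfolding glue_E_def by auto
  have "e0 \<subseteq> V i" using gr ie unfolding graph_def by auto
  thus "e \<subseteq> glue_V t V a b \<sigma>" using ie unfolding glue_V_def by auto
qed

lemma ex_le:
  fixes t :: nat and V :: "nat \<Rightarrow> nat set" and E :: "nat \<Rightarrow> nat set set"
    and a b :: "nat \<Rightarrow> nat" and al A eta :: "nat \<Rightarrow> real"
  assumes t1: "t \<ge> 1"
    and gr: "\<forall>i<t. graph (V i) (E i)"
    and alr: "\<forall>i<t. 0 \<le> al i \<and> al i < 1"
    and etap: "\<forall>i<t. eta i > 0"
    and ES: "\<forall>i<t. ES_good (al i) (A i) (eta i) (V i) (E i)"
    and fe: "\<forall>i<t. {a i, b i} \<in> E i"
    and npos: "n > 0"
  shows "real (ex n (glued_family t V E a b)) \<le> Kc t V A * real n powr (1 + Max (al ` {..<t}))"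
proof -
  define F where "F = glued_family t V E a b"
  define S where "S = {card E | E. graph {0..<n} E \<and> (\<forall>H\<in>F. \<not> contains {0..<n::nat} E (fst H) (snd H))}"
  have finS: "finite S"
  proof -
    have "S \<subseteq> {..n^2}" unfolding S_def using card_edges_le by fastforce
    thus ?thesis using finite_subset by auto
  qed
  have free0: "\<forall>H\<in>F. \<not> contains {0..<n::nat} {} (fst H) (snd H)"
  proof
    fix H assume "H \<in> F"
    then obtain \<sigma> where H: "H = (glue_V t V a b \<sigma>, glue_E t E a b \<sigma>)" unfolding F_def glued_family_def by auto
    obtain e where e: "e \<in> glue_E t E a b \<sigma>" using glue_E_nonempty[OF t1 gr fe] by blast
    show "\<not> contains {0..<n} {} (fst H) (snd H)"
      unfolding contains_def embeddings_def H using e by auto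
  qed
  have "graph {0..<n::nat} {}" unfolding graph_def by auto
  hence "0 \<in> S" unfolding S_def using free0 by force
  hence Sne: "S \<noteq> {}" by auto
  have "ex n F = Max S" unfolding ex_def S_def by simp
  hence "ex n F \<in> S" using Max_in[OF finS Sne] by simp
  then obtain EE where EE: "ex n F = card EE" "graph {0..<n} EE"
    "\<forall>H\<in>F. \<not> contains {0..<n::nat} EE (fst H) (snd H)" unfolding S_def by auto
  show ?thesis
  proof (rule ccontr)
    assume "\<not> ?thesis"
    hence big: "real (card EE) \<ge> Kc t V A * real n powr (1 + Max (al ` {..<t}))"
      using EE(1) unfolding F_def by simp
    obtain \<sigma> where "contains {0..<n} EE (glue_V t V a b \<sigma>) (glue_E t E a b \<sigma>)"
      using part1_contains[OF t1 gr alr etap ES fe EE(2) _ npos big] by auto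
    moreover have "(glue_V t V a b \<sigma>, glue_E t E a b \<sigma>) \<in> F" unfolding F_def glued_family_def by auto
    ultimately show False using EE(3) by force
  qed
qed

lemma part2:
  fixes t :: nat and V :: "nat \<Rightarrow> nat set" and E :: "nat \<Rightarrow> nat set set"
    and a b :: "nat \<Rightarrow> nat" and al A eta :: "nat \<Rightarrow> real"
  assumes t1: "t \<ge> 1"
    and gr: "\<forall>i<t. graph (V i) (E i)"
    and alr: "\<forall>i<t. 0 \<le> al i \<and> al i < 1"
    and etap: "\<forall>i<t. eta i > 0"
    and ES: "\<forall>i<t. ES_good (al i) (A i) (eta i) (V i) (E i)"
    and fe: "\<forall>i<t. {a i, b i} \<in> E i"
    and iso: "\<forall>G\<in>glued_family t V E a b. \<forall>G'\<in>glued_family t V E a b.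
            graph_iso (fst G) (snd G) (fst G') (snd G')"
    and GF: "G \<in> glued_family t V E a b"
  shows "ES_good (Max (al ` {..<t})) (Kc t V A) ((\<Prod>i<t. dl t V E eta i) / 2^(t+1)) (fst G) (snd G)"
proof -
  obtain \<sigma>0 where G: "G = (glue_V t V a b \<sigma>0, glue_E t E a b \<sigma>0)"
    using GF unfolding glued_family_def by auto
  have finV: "\<forall>i<t. finite (V i)" using gr unfolding graph_def by auto
  show ?thesis unfolding ES_good_def
  proof (intro allI impI)
    fix VG :: "nat set" and EG n
    assume H: "graph VG EG \<and> card VG = n \<and> 0 < n \<and>
        Kc t V A * real n powr (1 + Max (al ` {..<t})) \<le> real (card EG)"
    have gG: "graph VG EG" and cV: "card VG = n" and npos: "n > 0"
      and big: "real (card EG) \<ge> Kc t V A * real n powr (1 + Max (al ` {..<t}))" using H by auto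
    obtain Good where Gd: "Good \<subseteq> EG" "real (card Good) \<ge> real (card EG) / 2" "card EG > 0"
       "\<forall>xy\<in>Good. \<forall>i<t. \<forall>C. C \<subseteq> VG \<and> card C \<le> sV t V \<and> C \<inter> xy = {} \<longrightarrow>
          real (card (emb_at (V i) (E i) (a i) (b i) VG EG xy C)) \<ge>
            tau t V E eta i (real (card EG) / real n ^ 2) n"
      using good_edges[OF t1 gr alr etap ES fe gG cV npos big] by blast
    define p where "p = real (card EG) / real n ^ 2"
    define \<tau> where "\<tau> = (\<lambda>i. tau t V E eta i p n)"
    have finG: "finite VG" using gG unfolding graph_def by auto
    have n1: "real n \<ge> 1" using npos by simp
    have ppos: "p > 0" unfolding p_def using Gd(3) npos by simp
    have p1: "p \<le> 1"
    proof -
      have "real (card EG) \<le> real n ^ 2" using card_edges_le[OF gG] cV by (metis of_nat_le_iff of_nat_power)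
      thus ?thesis unfolding p_def using npos by simp
    qed
    have tp: "\<forall>i<t. \<tau> i > 0" unfolding \<tau>_def using tau_pos t1 etap ppos npos by blast
    have tg: "\<forall>xy\<in>Good. real (card (tup t V E a b VG EG xy)) \<ge> (\<Prod>i<t. \<tau> i)"
    proof
      fix xy assume xy: "xy \<in> Good"
      show "real (card (tup t V E a b VG EG xy)) \<ge> (\<Prod>i<t. \<tau> i)" unfolding \<tau>_def
        by (rule good_tuples[OF t1 gr finG]) (use Gd(4) xy tp in \<open>auto simp: p_def \<tau>_def less_imp_le\<close>)
    qed
    define c where "c = copies (fst G) (snd G) VG EG"
    have ceq: "\<forall>\<sigma>\<in>PiE {..<t} (\<lambda>_. UNIV). copies (glue_V t V a b \<sigma>) (glue_E t E a b \<sigma>) VG EG = c"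
    proof
      fix \<sigma> :: "nat \<Rightarrow> bool"
      have Gs: "(glue_V t V a b \<sigma>, glue_E t E a b \<sigma>) \<in> glued_family t V E a b"
        unfolding glued_family_def by auto
      have i1: "graph_iso (fst G) (snd G) (glue_V t V a b \<sigma>) (glue_E t E a b \<sigma>)"
        using iso GF Gs by force
      have i2: "graph_iso (glue_V t V a b \<sigma>) (glue_E t E a b \<sigma>) (fst G) (snd G)"
        using iso GF Gs by force
      have "copies (glue_V t V a b \<sigma>) (glue_E t E a b \<sigma>) VG EG \<le> c"
        unfolding c_def G using copies_iso_le[OF i1[unfolded G fst_conv snd_conv]
            glue_E_sub[OF gr] finite_glue_V[OF finV] finG] by simp
      moreover have "c \<le> copies (glue_V t V a b \<sigma>) (glue_E t E a b \<sigma>) VG EG"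
        unfolding c_def G using copies_iso_le[OF i2[unfolded G fst_conv snd_conv]
            glue_E_sub[OF gr] finite_glue_V[OF finV] finG] by simp
      ultimately show "copies (glue_V t V a b \<sigma>) (glue_E t E a b \<sigma>) VG EG = c" by simp
    qed
    have cnt: "real (card Good) * (\<Prod>i<t. \<tau> i) \<le> 2^t * real c"
      by (rule count_lemma[OF t1 gr fe gG Gd(1) tg ceq])
    have cG: "real (card Good) \<ge> p * real n ^ 2 / 2" unfolding p_def using Gd(2) npos by simp
    have ee: "\<forall>i<t. card (E i) \<ge> 1"
    proof (intro allI impI)
      fix i assume "i < t"
      hence "{a i, b i} \<in> E i" "finite (E i)" using fe gr graph_finite_E by auto
      thus "card (E i) \<ge> 1" by (metis One_nat_def Suc_leI card_gt_0_iff empty_iff)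
    qed
    have vv: "\<forall>i<t. card (V i) \<ge> 2"
    proof (intro allI impI)
      fix i assume it: "i < t"
      show "card (V i) \<ge> 2" by (rule graph_card_V_ge2[OF gr[rule_format, OF it] fe[rule_format, OF it]])
    qed
    have dpos: "\<forall>i<t. dl t V E eta i > 0" using etap t1 unfolding dl_def by simp
    have "(\<Prod>i<t. dl t V E eta i) / 2^(t+1) * p ^ card (snd G) * real n ^ card (fst G) \<le> real c"
      by (rule final_arith[OF ppos p1 n1 cG cnt _ ee vv dpos]) (use glue_E_card[OF t1 gr fe, of \<sigma>0] glue_V_card[OF gr fe, of \<sigma>0] in \<open>auto simp: \<tau>_def tau_def G\<close>)
    thus "(\<Prod>i<t. dl t V E eta i) / 2^(t+1) * (real (card EG) / real n ^ 2) ^ card (snd G) * real n ^ card (fst G)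
        \<le> real (copies (fst G) (snd G) VG EG)" unfolding p_def c_def .
  qed
qed


theorem theorem3p4:
  fixes t :: nat
    and V :: "nat \<Rightarrow> nat set" and E :: "nat \<Rightarrow> nat set set"
    and a b :: "nat \<Rightarrow> nat"
    and al A eta :: "nat \<Rightarrow> real"
  assumes "t \<ge> 1"
    and "\<forall>i<t. graph (V i) (E i)"
    and "\<forall>i<t. 0 \<le> al i \<and> al i < 1"
    and "\<forall>i<t. eta i > 0"
    and "\<forall>i<t. ES_good (al i) (A i) (eta i) (V i) (E i)"
    and "\<forall>i<t. {a i, b i} \<in> E i"
  shows "(\<lambda>n. real (ex n (glued_family t V E a b)))
           \<in> O(\<lambda>n. real n powr (1 + Max (al ` {..<t})))
         \<and> ((\<forall>G\<in>glued_family t V E a b. \<forall>G'\<in>glued_family t V E a b.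
            graph_iso (fst G) (snd G) (fst G') (snd G')) \<longrightarrow>
         (\<forall>G\<in>glued_family t V E a b. \<exists>A' \<eta>'. A' > 0 \<and> \<eta>' > 0 \<and>
            ES_good (Max (al ` {..<t})) A' \<eta>' (fst G) (snd G)))"
proof (intro conjI impI ballI)
  note h = assms
  show "(\<lambda>n. real (ex n (glued_family t V E a b))) \<in> O(\<lambda>n. real n powr (1 + Max (al ` {..<t})))"
  proof (rule bigoI)
    show "\<forall>\<^sub>F n in at_top. norm (real (ex n (glued_family t V E a b)))
        \<le> Kc t V A * norm (real n powr (1 + Max (al ` {..<t})))"
    proof (rule eventually_at_top_linorderI[of 1])
      fix n :: nat assume "n \<ge> 1"
      hence "real (ex n (glued_family t V E a b)) \<le> Kc t V A * real n powr (1 + Max (al ` {..<t}))"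
        using ex_le[OF h] by simp
      thus "norm (real (ex n (glued_family t V E a b)))
        \<le> Kc t V A * norm (real n powr (1 + Max (al ` {..<t})))" by simp
    qed
  qed
next
  fix G assume iso: "\<forall>G\<in>glued_family t V E a b. \<forall>G'\<in>glued_family t V E a b.
            graph_iso (fst G) (snd G) (fst G') (snd G')"
    and GF: "G \<in> glued_family t V E a b"
  have "Kc t V A > 0" using Kc_ge[OF assms(1), of V A] by linarith
  moreover have "(\<Prod>i<t. dl t V E eta i) / 2^(t+1) > 0"
    using assms(1,4) unfolding dl_def by (intro divide_pos_pos prod_pos) auto
  ultimately show "\<exists>A' \<eta>'. A' > 0 \<and> \<eta>' > 0 \<and> ES_good (Max (al ` {..<t})) A' \<eta>' (fst G) (snd G)"
    using part2[OF assms iso GF] by blast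
qed



end
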